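(* Let $\mathbf v\in\mathbb R_{>0}^m$, $\tau=\sum_iv_i^2k_i$, and let $\mathcal V\in\mathcal P_{\mathbf v}(m,\mathbf k,d)$ be irreducible. Then the smooth map $\mathrm{RSO}:\mathcal P_{\mathbf v}\to\mathcal G\ell(d)^+_\tau$, $\mathrm{RSO}(\mathcal U)=S_{\mathcal U}$, has a smooth local cross section around $S_{\mathcal V}$ sending $S_{\mathcal V}$ to $\mathcal V$: there exist an open neighborhood $A$ of $S_{\mathcal V}$ in $\mathcal G\ell(d)^+_\tau$ and a smooth map $\rho:A\to\mathcal P_{\mathbf v}$ such that $S_{\rho(S)}=S$ for all $S\in A$ and $\rho(S_{\mathcal V})=\mathcal V$.
   Context: Fix integers $m,d\ge1$ and $\mathbf k=(k_1,\dots,k_m)\in\mathbb N^m$ with each $k_i\le d$. A system is an $m$-tuple $\mathcal V=(V_i)_{i=1}^m$ with $V_i\in L(\mathbb C^d,\mathbb C^{k_i})$; its RS operator is $S_{\mathcal V}=\sum_iV_i^*V_i$, and $\mathcal V$ is a reconstruction system (RS) if $S_{\mathcal V}$ is invertible. Given weights $\mathbf v=(v_i)\in\mathbb R_{>0}^m$, $\mathcal P_{\mathbf v}=\mathcal P_{\mathbf v}(m,\mathbf k,d)$ is the set of RS's with $V_iV_i^*=v_i^2I_{k_i}$ for all $i$ (projective RS's with weights $\mathbf v$); then $\operatorname{tr}S_{\mathcal V}=\tau:=\sum_iv_i^2k_i$. A system $\mathcal V\in\mathcal P_{\mathbf v}$ is irreducible if the commutant $\{A\in M_d(\mathbb C):AV_i^*V_i=V_i^*V_iA\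 \forall i\}$ equals $\mathbb C I_d$. Let $\mathcal I(k,d)=\{U\in L(\mathbb C^k,\mathbb C^d):U^*U=I_k\}$ and $\mathcal I(\mathbf k,d)=\prod_i\mathcal I(k_i,d)$ (product manifold). The map $\mathcal V\mapsto(v_i^{-1}V_i^* )_i$ is a bijection of $\mathcal P_{\mathbf v}$ onto the open subset $\mathcal I_0(\mathbf k,d)=\{(U_i)\in\mathcal I(\mathbf k,d):\sum_iU_iU_i^*\text{ invertible}\}$; $\mathcal P_{\mathbf v}$ carries the smooth structure making this bijection a diffeomorphism. $\mathcal G\ell(d)^+_\tau$ is the manifold of positive definite $d\times d$ matrices with trace $\tau$ (an open subset of the affine space of Hermitian matrices of trace $\tau$). *)

theory Defs
  imports "HOL-Analysis.Analysis"
begin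

text \<open>C^d is modelled by complex^'n with d = CARD('n). A system V = (V_i)_{i<m} with
  V_i in L(C^d, C^{k_i}) is a function V :: nat => nat => 'n => complex, where
  V i r c is the (r,c) entry of V_i (row r < k i, column c).  Entries outside the
  range (i >= m or r >= k i) are required to be 0 (canonical representation).\<close>

type_synonym 'n system = "nat \<Rightarrow> nat \<Rightarrow> 'n \<Rightarrow> complex"

definition wf_system :: "nat \<Rightarrow> (nat \<Rightarrow> nat) \<Rightarrow> ('n::finite) system \<Rightarrow> bool" where
  "wf_system m k V \<longleftrightarrow> (\<forall>i r c. (i \<ge> m \<or> r \<ge> k i) \<longrightarrow> V i r c = 0)"

definition frame_block :: "(nat \<Rightarrow> nat) \<Rightarrow> ('n::finite) system \<Rightarrow> nat \<Rightarrow> complex^'n^'n" where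
  "frame_block k V i = (\<chi> a b. \<Sum>r<k i. cnj (V i r a) * V i r b)"

definition RS_op :: "nat \<Rightarrow> (nat \<Rightarrow> nat) \<Rightarrow> ('n::finite) system \<Rightarrow> complex^'n^'n" where
  "RS_op m k V = (\<Sum>i<m. frame_block k V i)"

definition Pv :: "nat \<Rightarrow> (nat \<Rightarrow> nat) \<Rightarrow> (nat \<Rightarrow> real) \<Rightarrow> ('n::finite) system set" where
  "Pv m k v = {V. wf_system m k V \<and>
     (\<forall>i<m. \<forall>r<k i. \<forall>s<k i.
        (\<Sum>c\<in>UNIV. V i r c * cnj (V i s c)) = (if r = s then complex_of_real ((v i)\<^sup>2) else 0))
     \<and> invertible (RS_op m k V)}"

definition irreducible_sys :: "nat \<Rightarrow> (nat \<Rightarrow> nat) \<Rightarrow> ('n::finite) system \<Rightarrow> bool" where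
  "irreducible_sys m k V \<longleftrightarrow>
     {A :: complex^'n^'n. \<forall>i<m. A ** frame_block k V i = frame_block k V i ** A} = range mat"

definition hermitian_mat :: "(complex^('n::finite)^'n) \<Rightarrow> bool" where
  "hermitian_mat S \<longleftrightarrow> (\<forall>a b. S $ a $ b = cnj (S $ b $ a))"

definition posdef_mat :: "(complex^('n::finite)^'n) \<Rightarrow> bool" where
  "posdef_mat S \<longleftrightarrow> hermitian_mat S \<and>
     (\<forall>x :: complex^'n. x \<noteq> 0 \<longrightarrow> 0 < Re (\<Sum>a\<in>UNIV. \<Sum>b\<in>UNIV. cnj (x $ a) * S $ a $ b * x $ b))"

definition herm_trace :: "real \<Rightarrow> (complex^('n::finite)^'n) set" where
  "herm_trace \<tau> = {S. hermitian_mat S \<and> trace S = complex_of_real \<tau>}"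

definition Gl_pos :: "real \<Rightarrow> (complex^('n::finite)^'n) set" where
  "Gl_pos \<tau> = {S. posdef_mat S \<and> trace S = complex_of_real \<tau>}"

text \<open>C-infinity on an open set W of a real normed vector space: there is a family D of
  iterated directional derivatives, D [] = f on W and D vs has Frechet derivative
  h |-> D (h # vs) x at each x in W (derivatives of every order exist).\<close>
definition smooth_on :: "'a::real_normed_vector set \<Rightarrow> ('a \<Rightarrow> 'b::real_normed_vector) \<Rightarrow> bool" where
  "smooth_on W f \<longleftrightarrow> (\<exists>D :: 'a list \<Rightarrow> 'a \<Rightarrow> 'b.
     (\<forall>x\<in>W. D [] x = f x) \<and>
     (\<forall>vs. \<forall>x\<in>W. (D vs has_derivative (\<lambda>h. D (h # vs) x)) (at x)))"

end

theory Submission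
  imports Defs
begin

lemma smooth_coinduct:
  fixes f :: "'a::real_normed_vector \<Rightarrow> 'b::real_normed_vector"
  assumes P: "P f"
    and step: "\<And>\<phi>. P \<phi> \<Longrightarrow> \<exists>\<phi>'. (\<forall>x\<in>W. (\<phi> has_derivative \<phi>' x) (at x)) \<and> (\<forall>h. P (\<lambda>x. \<phi>' x h))"
  shows "smooth_on W f"
proof -
  define der where "der \<phi> = (SOME \<phi>'. (\<forall>x\<in>W. (\<phi> has_derivative \<phi>' x) (at x)) \<and> (\<forall>h. P (\<lambda>x. \<phi>' x h)))"
    for \<phi> :: "'a \<Rightarrow> 'b"
  have der: "(\<forall>x\<in>W. (\<phi> has_derivative der \<phi> x) (at x)) \<and> (\<forall>h. P (\<lambda>x. der \<phi> x h))" if "P \<phi>" for \<phi>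
    unfolding der_def by (rule someI_ex[OF step[OF that]])
  define D :: "'a list \<Rightarrow> 'a \<Rightarrow> 'b" where "D = rec_list f (\<lambda>h vs Dvs. \<lambda>x. der Dvs x h)"
  have D0: "D [] = f" and DC: "D (h#vs) = (\<lambda>x. der (D vs) x h)" for h vs by (simp_all add: D_def)
  have PD: "P (D vs)" for vs
    by (induction vs) (use P der in \<open>auto simp: D0 DC\<close>)
  show ?thesis unfolding smooth_on_def
  proof (intro exI conjI ballI allI)
    show "D [] x = f x" for x by (simp add: D0)
    fix vs x assume "x\<in>W"
    then have "(D vs has_derivative der (D vs) x) (at x)" using der[OF PD] by blast
    then show "(D vs has_derivative (\<lambda>h. D (h # vs) x)) (at x)" by (simp add: DC)
  qed
qed

lemma smooth_onD:
  assumes "smooth_on W f" "open W"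
  obtains f' where "\<And>x. x\<in>W \<Longrightarrow> (f has_derivative f' x) (at x)" "\<And>h. smooth_on W (\<lambda>x. f' x h)"
proof -
  from assms obtain D where D0: "\<forall>x\<in>W. D [] x = f x"
    and DD: "\<forall>vs. \<forall>x\<in>W. (D vs has_derivative (\<lambda>h. D (h#vs) x)) (at x)"
    unfolding smooth_on_def by blast
  show ?thesis
  proof (rule that[of "\<lambda>x h. D [h] x"])
    fix x assume "x\<in>W"
    have "(D [] has_derivative (\<lambda>h. D [h] x)) (at x)" using DD \<open>x\<in>W\<close> by blast
    then show "(f has_derivative (\<lambda>h. D [h] x)) (at x)"
      by (rule has_derivative_transform_within_open[OF _ \<open>open W\<close> \<open>x\<in>W\<close>]) (use D0 in auto)
  next
    fix h
    show "smooth_on W (\<lambda>x. D [h] x)" unfolding smooth_on_def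
      by (rule exI[of _ "\<lambda>vs. D (vs @ [h])"]) (use DD in auto)
  qed
qed

lemma smooth_on_cong:
  assumes "smooth_on W f" "\<And>x. x\<in>W \<Longrightarrow> f x = g x"
  shows "smooth_on W g"
  using assms unfolding smooth_on_def by metis

lemma smooth_on_subset:
  assumes "smooth_on W f" "V \<subseteq> W"
  shows "smooth_on V f"
  using assms unfolding smooth_on_def by blast

lemma smooth_on_affine:
  assumes "bounded_linear l"
  shows "smooth_on W (\<lambda>x. l x + c)"
proof (rule smooth_coinduct[where P="\<lambda>\<phi>. \<exists>l c. bounded_linear l \<and> \<phi> = (\<lambda>x. l x + c)"])
  show "\<exists>la ca. bounded_linear la \<and> (\<lambda>x. l x + c) = (\<lambda>x. la x + ca)" using assms by blast
next
  fix \<phi> :: "'a \<Rightarrow> 'b" assume "\<exists>l c. bounded_linear l \<and> \<phi> = (\<lambda>x. l x + c)"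
  then obtain l c where l: "bounded_linear l" and \<phi>: "\<phi> = (\<lambda>x. l x + c)" by blast
  show "\<exists>\<phi>'. (\<forall>x\<in>W. (\<phi> has_derivative \<phi>' x) (at x)) \<and> (\<forall>h. \<exists>l c. bounded_linear l \<and> (\<lambda>x. \<phi>' x h) = (\<lambda>x. l x + c))"
  proof (rule exI[of _ "\<lambda>_. l"], intro conjI allI ballI)
    show "(\<phi> has_derivative (\<lambda>x. l x)) (at x)" for x
      unfolding \<phi> using l by (auto intro!: derivative_eq_intros simp: bounded_linear_imp_has_derivative)
    show "\<exists>la ca. bounded_linear la \<and> (\<lambda>x. (\<lambda>_. l) x h) = (\<lambda>x. la x + ca)" for h
      by (rule exI[of _ "\<lambda>_. 0"], rule exI[of _ "l h"]) (simp add: bounded_linear_zero)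
  qed
qed

lemma smooth_on_const: "smooth_on W (\<lambda>x. c)"
  using smooth_on_affine[OF bounded_linear_zero, of W c] by simp

lemma smooth_on_linear: "bounded_linear l \<Longrightarrow> smooth_on W l"
  using smooth_on_affine[of l W 0] by simp

lemma smooth_on_id: "smooth_on W (\<lambda>x. x)"
  by (rule smooth_on_linear[OF bounded_linear_ident])

lemma smooth_on_add:
  assumes "open W" "smooth_on W f" "smooth_on W g"
  shows "smooth_on W (\<lambda>x. f x + g x)"
proof (rule smooth_coinduct[where P="\<lambda>\<phi>. \<exists>f g. smooth_on W f \<and> smooth_on W g \<and> \<phi> = (\<lambda>x. f x + g x)"])
  show "\<exists>fa ga. smooth_on W fa \<and> smooth_on W ga \<and> (\<lambda>x. f x + g x) = (\<lambda>x. fa x + ga x)"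
    using assms by blast
next
  fix \<phi> :: "'a \<Rightarrow> 'b" assume "\<exists>f g. smooth_on W f \<and> smooth_on W g \<and> \<phi> = (\<lambda>x. f x + g x)"
  then obtain f g where f: "smooth_on W f" and g: "smooth_on W g" and \<phi>: "\<phi> = (\<lambda>x. f x + g x)" by blast
  obtain f' where f1: "\<And>x. x\<in>W \<Longrightarrow> (f has_derivative f' x) (at x)" and f2: "\<And>h. smooth_on W (\<lambda>x. f' x h)"
    using smooth_onD[OF f \<open>open W\<close>] by blast
  obtain g' where g1: "\<And>x. x\<in>W \<Longrightarrow> (g has_derivative g' x) (at x)" and g2: "\<And>h. smooth_on W (\<lambda>x. g' x h)"
    using smooth_onD[OF g \<open>open W\<close>] by blast
  show "\<exists>\<phi>'. (\<forall>x\<in>W. (\<phi> has_derivative \<phi>' x) (at x)) \<and> (\<forall>h. \<exists>f g. smooth_on W f \<and> smooth_on W g \<and> (\<lambda>x. \<phi>' x h) = (\<lambda>x. f x + g x))"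
  proof (rule exI[of _ "\<lambda>x h. f' x h + g' x h"], intro conjI ballI allI)
    show "(\<phi> has_derivative (\<lambda>h. f' x h + g' x h)) (at x)" if "x\<in>W" for x
      unfolding \<phi> using f1[OF that] g1[OF that] by (rule has_derivative_add)
    fix h show "\<exists>f g. smooth_on W f \<and> smooth_on W g \<and> (\<lambda>x. f' x h + g' x h) = (\<lambda>x. f x + g x)"
      using f2[of h] g2[of h] by blast
  qed
qed

lemma smooth_on_sum:
  assumes "open W" "finite S" "\<And>i. i\<in>S \<Longrightarrow> smooth_on W (f i)"
  shows "smooth_on W (\<lambda>x. \<Sum>i\<in>S. f i x)"
  using assms(2,3)
proof (induction S rule: finite_induct)
  case empty then show ?case by (simp add: smooth_on_const)
next
  case (insert a S) then show ?case by (simp add: smooth_on_add[OF \<open>open W\<close>])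
qed

lemma smooth_on_postlinear:
  assumes "bounded_linear l" "smooth_on W f"
  shows "smooth_on W (\<lambda>x. l (f x))"
proof -
  from assms(2) obtain D where D0: "\<forall>x\<in>W. D [] x = f x"
    and DD: "\<forall>vs. \<forall>x\<in>W. (D vs has_derivative (\<lambda>h. D (h#vs) x)) (at x)"
    unfolding smooth_on_def by blast
  show ?thesis unfolding smooth_on_def
  proof (rule exI[of _ "\<lambda>vs x. l (D vs x)"], intro conjI ballI allI)
    fix x vs assume "x\<in>W"
    show "l (D [] x) = l (f x)" using D0 \<open>x\<in>W\<close> by simp
    show "((\<lambda>x. l (D vs x)) has_derivative (\<lambda>h. l (D (h # vs) x))) (at x)"
      using bounded_linear.has_derivative[OF assms(1), of "D vs" "\<lambda>h. D (h # vs) x" "at x"] DD \<open>x\<in>W\<close> by blast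
  qed
qed

lemma smooth_on_preaffine:
  assumes "smooth_on U G" "bounded_linear l" "\<And>x. x\<in>W \<Longrightarrow> l x + c \<in> U"
  shows "smooth_on W (\<lambda>x. G (l x + c))"
proof -
  from assms(1) obtain D where D0: "\<forall>x\<in>U. D [] x = G x"
    and DD: "\<forall>vs. \<forall>x\<in>U. (D vs has_derivative (\<lambda>h. D (h#vs) x)) (at x)"
    unfolding smooth_on_def by blast
  show ?thesis unfolding smooth_on_def
  proof (rule exI[of _ "\<lambda>vs x. D (map l vs) (l x + c)"], intro conjI ballI allI)
    fix x assume x: "x\<in>W"
    show "D (map l []) (l x + c) = G (l x + c)" using D0 assms(3)[OF x] by simp
    fix vs
    have 1: "((\<lambda>x. l x + c) has_derivative l) (at x)"
      using assms(2) by (auto intro!: derivative_eq_intros simp: bounded_linear_imp_has_derivative)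
    have 2: "(D (map l vs) has_derivative (\<lambda>h. D (h # map l vs) (l x + c))) (at (l x + c))"
      using DD assms(3)[OF x] by blast
    show "((\<lambda>x. D (map l vs) (l x + c)) has_derivative (\<lambda>h. D (map l (h # vs)) (l x + c))) (at x)"
      using has_derivative_compose[OF 1 2] by simp
  qed
qed

lemma smooth_on_prelinear:
  assumes "smooth_on U G" "bounded_linear l" "\<And>x. x\<in>W \<Longrightarrow> l x \<in> U"
  shows "smooth_on W (\<lambda>x. G (l x))"
  using smooth_on_preaffine[of U G l W 0] assms by simp

lemma smooth_on_Pair:
  assumes "smooth_on W f" "smooth_on W g"
  shows "smooth_on W (\<lambda>x. (f x, g x))"
proof -
  from assms(1) obtain D where D0: "\<forall>x\<in>W. D [] x = f x"
    and DD: "\<forall>vs. \<forall>x\<in>W. (D vs has_derivative (\<lambda>h. D (h#vs) x)) (at x)"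
    unfolding smooth_on_def by blast
  from assms(2) obtain E where E0: "\<forall>x\<in>W. E [] x = g x"
    and EE: "\<forall>vs. \<forall>x\<in>W. (E vs has_derivative (\<lambda>h. E (h#vs) x)) (at x)"
    unfolding smooth_on_def by blast
  show ?thesis unfolding smooth_on_def
    by (rule exI[of _ "\<lambda>vs x. (D vs x, E vs x)"]) (use D0 DD E0 EE in \<open>auto intro!: has_derivative_Pair\<close>)
qed

inductive prodsums :: "'a::real_normed_vector set \<Rightarrow> ('b::real_normed_vector \<Rightarrow> 'c::real_normed_vector \<Rightarrow> 'd::real_normed_vector) \<Rightarrow> ('a \<Rightarrow> 'd) \<Rightarrow> bool"
  for W bl where
  ps_prod: "smooth_on W f \<Longrightarrow> smooth_on W g \<Longrightarrow> (prodsums W bl (\<lambda>x. bl (f x) (g x)))"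
| ps_add: "prodsums W bl (\<phi>) \<Longrightarrow> prodsums W bl (\<psi>) \<Longrightarrow> (prodsums W bl (\<lambda>x. \<phi> x + \<psi> x))"

lemma prodsums_step:
  assumes bb: "bounded_bilinear bl" and W: "open W" and "prodsums W bl (\<phi>)"
  shows "\<exists>\<phi>'. (\<forall>x\<in>W. (\<phi> has_derivative \<phi>' x) (at x)) \<and> (\<forall>h. (prodsums W bl (\<lambda>x. \<phi>' x h)))"
  using assms(3)
proof (induction rule: prodsums.induct)
  case (ps_prod f g)
  obtain f' where f1: "\<And>x. x\<in>W \<Longrightarrow> (f has_derivative f' x) (at x)" and f2: "\<And>h. smooth_on W (\<lambda>x. f' x h)"
    using smooth_onD[OF ps_prod(1) W] by blast
  obtain g' where g1: "\<And>x. x\<in>W \<Longrightarrow> (g has_derivative g' x) (at x)" and g2: "\<And>h. smooth_on W (\<lambda>x. g' x h)"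
    using smooth_onD[OF ps_prod(2) W] by blast
  show ?case
  proof (rule exI[of _ "\<lambda>x h. bl (f x) (g' x h) + bl (f' x h) (g x)"], intro conjI ballI allI)
    show "((\<lambda>x. bl (f x) (g x)) has_derivative (\<lambda>h. bl (f x) (g' x h) + bl (f' x h) (g x))) (at x)"
      if "x\<in>W" for x
      using bounded_bilinear.FDERIV[OF bb f1[OF that] g1[OF that]] .
    fix h show "(prodsums W bl (\<lambda>x. bl (f x) (g' x h) + bl (f' x h) (g x)))"
      using ps_prod.prems ps_prod.hyps f2 g2 by (intro prodsums.intros) 
  qed
next
  case (ps_add \<phi> \<psi>)
  obtain \<phi>' where p1: "\<forall>x\<in>W. (\<phi> has_derivative \<phi>' x) (at x)" and p2: "\<forall>h. (prodsums W bl (\<lambda>x. \<phi>' x h))"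
    using ps_add.IH(1) by blast
  obtain \<psi>' where q1: "\<forall>x\<in>W. (\<psi> has_derivative \<psi>' x) (at x)" and q2: "\<forall>h. (prodsums W bl (\<lambda>x. \<psi>' x h))"
    using ps_add.IH(2) by blast
  show ?case
  proof (rule exI[of _ "\<lambda>x h. \<phi>' x h + \<psi>' x h"], intro conjI ballI allI)
    show "((\<lambda>x. \<phi> x + \<psi> x) has_derivative (\<lambda>h. \<phi>' x h + \<psi>' x h)) (at x)" if "x\<in>W" for x
      using p1 q1 that by (auto intro: has_derivative_add)
    fix h show "(prodsums W bl (\<lambda>x. \<phi>' x h + \<psi>' x h))"
      using p2 q2 by (intro prodsums.intros) auto
  qed
qed

lemma smooth_on_bilinear:
  assumes bb: "bounded_bilinear bl" and W: "open W" and "smooth_on W f" "smooth_on W g"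
  shows "smooth_on W (\<lambda>x. bl (f x) (g x))"
proof (rule smooth_coinduct[where P="prodsums W bl"])
  show "prodsums W bl (\<lambda>x. bl (f x) (g x))" using assms(3,4) by (rule ps_prod)
next
  fix \<phi> assume "prodsums W bl \<phi>"
  then show "\<exists>\<phi>'. (\<forall>x\<in>W. (\<phi> has_derivative \<phi>' x) (at x)) \<and> (\<forall>h. prodsums W bl (\<lambda>x. \<phi>' x h))"
    by (rule prodsums_step[OF bb W])
qed

lemma smooth_on_scaleR:
  assumes "open W" "smooth_on W f" "smooth_on W g"
  shows "smooth_on W (\<lambda>x. f x *\<^sub>R g x)"
  using smooth_on_bilinear[OF bounded_bilinear_scaleR assms] .

lemma smooth_on_mult:
  fixes f g :: "'a::real_normed_vector \<Rightarrow> 'b::real_normed_algebra"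
  assumes "open W" "smooth_on W f" "smooth_on W g"
  shows "smooth_on W (\<lambda>x. f x * g x)"
  using smooth_on_bilinear[OF bounded_bilinear_mult assms] .

lemma smooth_on_ode:
  fixes g :: "'a::real_normed_vector \<Rightarrow> 'b::euclidean_space"
    and G :: "'a \<times> 'b \<Rightarrow> 'c::real_normed_vector"
  assumes W: "open W" and U: "open U" and gU: "\<And>y. y\<in>W \<Longrightarrow> g y \<in> U"
    and gd: "\<And>y. y\<in>W \<Longrightarrow> (g has_derivative (\<lambda>h. \<Phi> h (y, g y))) (at y)"
    and \<Phi>s: "\<And>h. smooth_on (W \<times> U) (\<Phi> h)"
    and G: "smooth_on (W \<times> U) G"
  shows "smooth_on W (\<lambda>y. G (y, g y))"
proof (rule smooth_coinduct[where P="\<lambda>\<phi>. \<exists>G. smooth_on (W \<times> U) G \<and> \<phi> = (\<lambda>y. G (y, g y))"])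
  show "\<exists>Ga. smooth_on (W \<times> U) Ga \<and> (\<lambda>y. G (y, g y)) = (\<lambda>y. Ga (y, g y))" using G by blast
next
  have WU: "open (W \<times> U)" using W U by (rule open_Times)
  fix \<phi> :: "'a \<Rightarrow> 'c" assume "\<exists>G. smooth_on (W \<times> U) G \<and> \<phi> = (\<lambda>y. G (y, g y))"
  then obtain G where G: "smooth_on (W \<times> U) G" and \<phi>: "\<phi> = (\<lambda>y. G (y, g y))" by blast
  obtain G' where G1: "\<And>p. p\<in>W \<times> U \<Longrightarrow> (G has_derivative G' p) (at p)"
    and G2: "\<And>k. smooth_on (W \<times> U) (\<lambda>p. G' p k)"
    using smooth_onD[OF G WU] by blast
  define Gh where "Gh h p = G' p (h, 0) + (\<Sum>e\<in>Basis. (\<Phi> h p \<bullet> e) *\<^sub>R G' p (0, e))" for h p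
  have Ghs: "smooth_on (W \<times> U) (Gh h)" for h
  proof -
    have "smooth_on (W \<times> U) (\<lambda>p. (\<Phi> h p \<bullet> e) *\<^sub>R G' p (0, e))" for e
      by (rule smooth_on_scaleR[OF WU smooth_on_postlinear[OF bounded_linear_inner_left \<Phi>s] G2])
    then have "smooth_on (W \<times> U) (\<lambda>p. \<Sum>e\<in>Basis. (\<Phi> h p \<bullet> e) *\<^sub>R G' p (0, e))"
      by (intro smooth_on_sum[OF WU finite_Basis])
    then show ?thesis unfolding Gh_def[abs_def] by (rule smooth_on_add[OF WU G2])
  qed
  have Ghe: "G' p (h, w) = Gh h p" if "p \<in> W \<times> U" "w = \<Phi> h p" for p h w
  proof -
    have lin: "linear (G' p)" using has_derivative_linear[OF G1[OF that(1)]] .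
    have "(\<Sum>e\<in>Basis. (w \<bullet> e) *\<^sub>R (0::'a, e)) = (0, w)"
      by (rule prod_eqI) (simp_all add: fst_sum snd_sum euclidean_representation)
    then have "(h, w) = (h, 0) + (\<Sum>e\<in>Basis. (w \<bullet> e) *\<^sub>R (0, e))" by simp
    then have "G' p (h, w) = G' p (h, 0) + (\<Sum>e\<in>Basis. (w \<bullet> e) *\<^sub>R G' p (0, e))"
      by (simp only: linear_add[OF lin] linear_sum[OF lin] linear_scale[OF lin])
    then show ?thesis by (simp add: Gh_def that(2))
  qed
  show "\<exists>\<phi>'. (\<forall>x\<in>W. (\<phi> has_derivative \<phi>' x) (at x)) \<and> (\<forall>h. \<exists>G. smooth_on (W \<times> U) G \<and> (\<lambda>x. \<phi>' x h) = (\<lambda>y. G (y, g y)))"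
  proof (rule exI[of _ "\<lambda>y h. Gh h (y, g y)"], intro conjI ballI allI)
    fix y assume y: "y \<in> W"
    have p: "(y, g y) \<in> W \<times> U" using y gU by auto
    have 1: "((\<lambda>y. (y, g y)) has_derivative (\<lambda>h. (h, \<Phi> h (y, g y)))) (at y)"
      by (intro has_derivative_Pair has_derivative_ident gd y)
    have "(\<phi> has_derivative (\<lambda>h. G' (y, g y) (h, \<Phi> h (y, g y)))) (at y)"
      unfolding \<phi> using has_derivative_compose[OF 1 G1[OF p]] .
    moreover have "(\<lambda>h. G' (y, g y) (h, \<Phi> h (y, g y))) = (\<lambda>h. Gh h (y, g y))"
      using Ghe[OF p] by auto
    ultimately show "(\<phi> has_derivative (\<lambda>h. Gh h (y, g y))) (at y)" by simp
  next
    fix h show "\<exists>G. smooth_on (W \<times> U) G \<and> (\<lambda>y. Gh h (y, g y)) = (\<lambda>y. G (y, g y))"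
      using Ghs by blast
  qed
qed

lemma smooth_on_compose:
  fixes a :: "'a::real_normed_vector \<Rightarrow> 'b::euclidean_space"
  assumes W: "open W" and U: "open U" and a: "smooth_on W a" and aU: "\<And>x. x\<in>W \<Longrightarrow> a x \<in> U"
    and G: "smooth_on U G"
  shows "smooth_on W (\<lambda>x. G (a x))"
proof -
  obtain a' where a1: "\<And>x. x\<in>W \<Longrightarrow> (a has_derivative a' x) (at x)" and a2: "\<And>h. smooth_on W (\<lambda>x. a' x h)"
    using smooth_onD[OF a W] by blast
  have "smooth_on W (\<lambda>y. (\<lambda>p. G (snd p)) (y, a y))"
  proof (rule smooth_on_ode[OF W U aU, where \<Phi>="\<lambda>h p. a' (fst p) h"])
    show "(a has_derivative (\<lambda>h. a' (fst (y, a y)) h)) (at y)" if "y\<in>W" for y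
      using a1[OF that] by simp
    show "smooth_on (W \<times> U) (\<lambda>p. a' (fst p) h)" for h
      by (rule smooth_on_prelinear[OF a2 bounded_linear_fst]) auto
    show "smooth_on (W \<times> U) (\<lambda>p. G (snd p))"
      by (rule smooth_on_prelinear[OF G bounded_linear_snd]) auto
  qed (auto)
  then show ?thesis by simp
qed


lemma norm_vec_le_sum: "norm (x::'a::real_normed_vector^'n) \<le> (\<Sum>i\<in>UNIV. norm (x$i))"
  unfolding norm_vec_def by (rule L2_set_le_sum) simp

lemma norm_entry_le: "norm (A$i$j) \<le> norm (A::'a::real_normed_vector^'n^'m)"
  using Finite_Cartesian_Product.norm_nth_le[of "A$i" j] Finite_Cartesian_Product.norm_nth_le[of A i] by linarith

lemma norm_matmul_le:
  fixes A B :: "'a::real_normed_field^'n^'n"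
  shows "norm (A ** B) \<le> real (CARD('n))^3 * norm A * norm B"
proof -
  let ?d = "real (CARD('n))"
  have e: "norm ((A ** B)$i$j) \<le> ?d * (norm A * norm B)" for i j
  proof -
    have "norm ((A ** B)$i$j) = norm (\<Sum>k\<in>UNIV. A$i$k * B$k$j)"
      by (simp add: matrix_matrix_mult_def)
    also have "\<dots> \<le> (\<Sum>k\<in>UNIV. norm (A$i$k) * norm (B$k$j))"
      by (rule order_trans[OF norm_sum]) (simp add: norm_mult)
    also have "\<dots> \<le> (\<Sum>k\<in>(UNIV::'n set). norm A * norm B)"
      by (intro sum_mono mult_mono norm_entry_le) auto
    finally show ?thesis by simp
  qed
  have "norm (A ** B) \<le> (\<Sum>i\<in>UNIV. norm ((A ** B)$i))" by (rule norm_vec_le_sum)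
  also have "\<dots> \<le> (\<Sum>i\<in>(UNIV::'n set). \<Sum>j\<in>(UNIV::'n set). norm ((A ** B)$i$j))"
    by (intro sum_mono norm_vec_le_sum)
  also have "\<dots> \<le> (\<Sum>i\<in>(UNIV::'n set). \<Sum>j\<in>(UNIV::'n set). ?d * (norm A * norm B))"
    by (intro sum_mono e)
  also have "\<dots> = ?d^3 * norm A * norm B" by (simp add: power3_eq_cube)
  finally show ?thesis .
qed

lemma norm_matmul_le':
  "norm ((A::'a::real_normed_field^'n^'n) ** (B::'a^'n^'n)) \<le> norm A * norm B * real (CARD('n))^3"
  using norm_matmul_le[of A B] by (simp add: mult_ac)

lemma bounded_bilinear_matmul:
  "bounded_bilinear (\<lambda>(A::'a::real_normed_field^'n^'n) (B::'a^'n^'n). A ** B)"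
proof
  fix a a' b b' :: "'a^'n^'n" and r :: real
  show "(a + a') ** b = a ** b + a' ** b"
    by (vector matrix_matrix_mult_def sum.distrib[symmetric] field_simps)
  show "a ** (b + b') = a ** b + a ** b'" by (rule matrix_add_ldistrib)
  show "(r *\<^sub>R a) ** b = r *\<^sub>R (a ** b)" by (simp add: scalar_matrix_assoc)
  show "a ** (r *\<^sub>R b) = r *\<^sub>R (a ** b)" by (simp add: matrix_scalar_ac scalar_matrix_assoc)
  show "\<exists>K. \<forall>(a::'a^'n^'n) (b::'a^'n^'n). norm (a ** b) \<le> norm a * norm b * K"
    by (rule exI[of _ "real (CARD('n))^3"]) (intro allI norm_matmul_le')
qed

interpretation mm: bounded_bilinear "\<lambda>(A::'a::real_normed_field^'n^'n) (B::'a^'n^'n). A ** B"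
  by (rule bounded_bilinear_matmul)

lemma continuous_on_det:
  "continuous_on UNIV (det :: 'a::real_normed_field^'n^'n \<Rightarrow> 'a)"
proof -
  have c: "continuous_on UNIV (\<lambda>A::'a^'n^'n. A$i$j)" for i j
    by (intro linear_continuous_on bounded_linear_compose[OF bounded_linear_vec_nth bounded_linear_vec_nth])
  show ?thesis unfolding det_def[abs_def]
    by (intro continuous_on_sum continuous_on_mult continuous_on_const continuous_on_prod c)
qed

lemma open_invertible: "open {A::'a::real_normed_field^'n^'n. invertible A}"
  using open_Collect_neq[OF continuous_on_det continuous_on_const, of 0]
  by (simp add: invertible_det_nz)

lemma matrix_inv_both:
  fixes A :: "'a::field^'n^'n"
  assumes "invertible A"
  shows "A ** matrix_inv A = mat 1" "matrix_inv A ** A = mat 1"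
proof -
  have "\<exists>A'. A ** A' = mat 1 \<and> A' ** A = mat 1" using assms unfolding invertible_def by blast
  then have "A ** matrix_inv A = mat 1 \<and> matrix_inv A ** A = mat 1"
    unfolding matrix_inv_def by (rule someI_ex)
  then show "A ** matrix_inv A = mat 1" "matrix_inv A ** A = mat 1" by auto
qed

lemma matrix_inv_unique:
  fixes A B :: "'a::field^'n^'n"
  assumes "A ** B = mat 1"
  shows "matrix_inv A = B"
proof -
  have inv: "invertible A" using assms invertible_right_inverse by blast
  have "matrix_inv A = matrix_inv A ** (A ** B)" using assms by simp
  also have "\<dots> = B" by (simp add: matrix_mul_assoc matrix_inv_both(2)[OF inv])
  finally show ?thesis .
qed

lemma matrix_inv_invertible:
  fixes A :: "'a::field^'n^'n"
  assumes "invertible A" shows "invertible (matrix_inv A)"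
  using matrix_inv_both[OF assms] unfolding invertible_def by blast

lemma matmul_diff_left: "((A::'a::ring_1^'n^'n) - B) ** C = A ** C - B ** C"
  by (vector matrix_matrix_mult_def sum_subtractf left_diff_distrib)

lemma matmul_diff_right: "(A::'a::ring_1^'n^'n) ** (B - C) = A ** B - A ** C"
  by (vector matrix_matrix_mult_def sum_subtractf right_diff_distrib)

lemma has_derivative_matrix_inv:
  fixes A :: "'a::real_normed_field^'n^'n"
  assumes A: "invertible A"
  shows "(matrix_inv has_derivative (\<lambda>H. - (matrix_inv A ** H ** matrix_inv A))) (at A)"
proof -
  define B where "B = matrix_inv A"
  define C where "C = real CARD('n)^3"
  have C1: "C \<ge> 1" unfolding C_def by simp
  have nm: "norm (X ** Y) \<le> C * norm X * norm Y" for X Y :: "'a^'n^'n"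
    unfolding C_def by (rule norm_matmul_le)
  have BA: "B ** A = mat 1" "A ** B = mat 1" using matrix_inv_both[OF A] by (auto simp: B_def)
  obtain e where e: "e > 0" and eb: "\<And>X. dist X A < e \<Longrightarrow> invertible X"
    using open_invertible[where 'a='a and 'n='n] A unfolding open_dist by blast
  define b where "b = norm B"
  have b0: "b \<ge> 0" by (simp add: b_def)
  define \<delta> where "\<delta> = min e (1 / (2 * C^2 * (b + 1)))"
  have \<delta>0: "\<delta> > 0" using e C1 b0 by (simp add: \<delta>_def)
  define K where "K = 2 * C^4 * b^3"
  have key: "norm (matrix_inv (A + H) - matrix_inv A - - (matrix_inv A ** H ** matrix_inv A)) \<le> K * norm H * norm H"
    if H: "norm H < \<delta>" for H
  proof -
    define Q where "Q = matrix_inv (A + H)"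
    define h where "h = norm H"
    define a where "a = norm Q"
    have h0: "h \<ge> 0" and a0: "a \<ge> 0" by (simp_all add: h_def a_def)
    have "invertible (A + H)" using H by (intro eb) (simp add: dist_norm \<delta>_def)
    then have QA: "Q ** (A + H) = mat 1" "(A + H) ** Q = mat 1"
      using matrix_inv_both by (auto simp: Q_def)
    have eq1: "Q - B = - (Q ** H ** B)"
    proof -
      have "Q ** H ** B = Q ** ((A + H) - A) ** B" by simp
      also have "\<dots> = Q ** (A + H) ** B - Q ** A ** B"
        by (simp only: matmul_diff_right matmul_diff_left)
      also have "\<dots> = B - Q" using QA BA by (simp add: matrix_mul_assoc[symmetric])
      finally show ?thesis by simp
    qed
    have small: "C^2 * h * b \<le> 1/2"
    proof -
      have "h \<le> 1 / (2 * C^2 * (b + 1))" using H by (simp add: h_def \<delta>_def)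
      moreover have pos: "2 * C^2 * (b + 1) > 0" using C1 b0 by simp
      ultimately have "h * (2 * C^2 * (b + 1)) \<le> 1" by (simp add: le_divide_eq)
      have "C^2 * h * b \<le> C^2 * h * (b + 1)" using h0 by (intro mult_left_mono) auto
      also have "\<dots> = (h * (2 * C^2 * (b + 1))) / 2" by simp
      finally show ?thesis using \<open>h * (2 * C^2 * (b + 1)) \<le> 1\<close> by linarith
    qed
    have "Q = B + (Q - B)" by simp
    also have "\<dots> = B - Q ** H ** B" unfolding eq1 by simp
    finally have "a = norm (B - Q ** H ** B)" by (simp add: a_def)
    also have "\<dots> \<le> b + norm (Q ** H ** B)" by (simp add: b_def norm_triangle_ineq4)
    also have "norm (Q ** H ** B) \<le> C * norm (Q ** H) * b" using nm by (simp add: b_def)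
    also have "\<dots> \<le> C * (C * a * h) * b"
      using nm[of Q H] C1 b0 by (intro mult_right_mono mult_left_mono) (auto simp: a_def h_def)
    finally have "a \<le> b + (C^2 * h * b) * a" by (simp add: power2_eq_square mult_ac)
    also have "\<dots> \<le> b + (1/2) * a" using small a0 by (intro add_left_mono mult_right_mono) auto
    finally have aB: "a \<le> 2 * b" by simp
    have eq2: "matrix_inv (A + H) - matrix_inv A - - (matrix_inv A ** H ** matrix_inv A) = Q ** H ** B ** H ** B"
    proof -
      have "matrix_inv (A + H) - matrix_inv A - - (matrix_inv A ** H ** matrix_inv A) = (Q - B) + B ** H ** B"
        by (simp add: Q_def B_def)
      also have "\<dots> = (B - Q) ** H ** B" using eq1 by (simp add: matmul_diff_left)
      also have "\<dots> = Q ** H ** B ** H ** B"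
        using eq1 by (metis minus_diff_eq minus_minus)
      finally show ?thesis .
    qed
    have "norm (Q ** H ** B ** H ** B) \<le> C * norm (Q ** H ** B ** H) * b" using nm by (simp add: b_def)
    also have "\<dots> \<le> C * (C * norm (Q ** H ** B) * h) * b"
      using nm[of "Q ** H ** B" H] C1 b0 by (intro mult_right_mono mult_left_mono) (auto simp: h_def)
    also have "\<dots> \<le> C * (C * (C * norm (Q ** H) * b) * h) * b"
      using nm[of "Q ** H" B] C1 b0 h0 by (intro mult_right_mono mult_left_mono) (auto simp: b_def)
    also have "\<dots> \<le> C * (C * (C * (C * a * h) * b) * h) * b"
      using nm[of Q H] C1 b0 h0 by (intro mult_right_mono mult_left_mono) (auto simp: a_def h_def)
    also have "\<dots> = C^4 * a * b^2 * h^2" by (simp add: power2_eq_square power4_eq_xxxx ac_simps)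
    also have "\<dots> \<le> C^4 * (2 * b) * b^2 * h^2"
      using aB C1 by (intro mult_right_mono mult_left_mono) auto
    also have "\<dots> = K * norm H * norm H" by (simp add: K_def h_def power2_eq_square power3_eq_cube ac_simps)
    finally show ?thesis using eq2 by simp
  qed
  have bl: "bounded_linear (\<lambda>H. - (matrix_inv A ** H ** matrix_inv A))"
    by (intro bounded_linear_minus bounded_linear_compose[OF mm.bounded_linear_left mm.bounded_linear_right])
  show ?thesis
    unfolding has_derivative_at
  proof (intro conjI bl)
    show "(\<lambda>h. norm (matrix_inv (A + h) - matrix_inv A - - (matrix_inv A ** h ** matrix_inv A)) / norm h) \<midarrow>0\<rightarrow> 0"
    proof (rule tendsto_sandwich[of "\<lambda>_. 0" _ _ "\<lambda>h. K * norm h"])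
      show "\<forall>\<^sub>F h in at 0. 0 \<le> norm (matrix_inv (A + h) - matrix_inv A - - (matrix_inv A ** h ** matrix_inv A)) / norm h"
        by simp
      show "\<forall>\<^sub>F h in at 0. norm (matrix_inv (A + h) - matrix_inv A - - (matrix_inv A ** h ** matrix_inv A)) / norm h \<le> K * norm h"
      proof -
        have ev: "eventually (\<lambda>h. norm h < \<delta> \<and> h \<noteq> 0) (at (0::'a^'n^'n))"
          unfolding eventually_at by (rule exI[of _ \<delta>]) (auto simp: \<delta>0 dist_norm)
        show ?thesis
        proof (rule eventually_mono[OF ev])
          fix h :: "'a^'n^'n" assume "norm h < \<delta> \<and> h \<noteq> 0"
          then have h0: "norm h > 0" and hd: "norm h < \<delta>" by auto
          show "norm (matrix_inv (A + h) - matrix_inv A - - (matrix_inv A ** h ** matrix_inv A)) / norm h \<le> K * norm h"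
            using key[OF hd] h0 by (simp add: divide_le_eq mult_ac)
        qed
      qed
      show "((\<lambda>_. 0) \<longlongrightarrow> 0) (at (0::'a^'n^'n))" by simp
      show "((\<lambda>h. K * norm h) \<longlongrightarrow> 0) (at (0::'a^'n^'n))"
        by (auto intro!: tendsto_eq_intros)
    qed
  qed
qed

lemma smooth_on_matmul:
  fixes f g :: "'x::real_normed_vector \<Rightarrow> 'a::real_normed_field^'n^'n"
  assumes "open W" "smooth_on W f" "smooth_on W g"
  shows "smooth_on W (\<lambda>x. f x ** g x)"
  using smooth_on_bilinear[OF bounded_bilinear_matmul assms] by simp

lemma smooth_on_matrix_inv:
  "smooth_on {A::'a::{real_normed_field,euclidean_space}^'n^'n. invertible A} matrix_inv"
proof -
  let ?W = "{A::'a^'n^'n. invertible A}"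
  have W: "open ?W" by (rule open_invertible)
  have WU: "open (?W \<times> (UNIV::('a^'n^'n) set))" using W by (intro open_Times) auto
  have "smooth_on ?W (\<lambda>A. snd (A, matrix_inv A))"
  proof (rule smooth_on_ode[OF W open_UNIV, where \<Phi>="\<lambda>H p. - (snd p ** H ** snd p)"])
    show "(matrix_inv has_derivative (\<lambda>H. - (snd (y, matrix_inv y) ** H ** snd (y, matrix_inv y)))) (at y)"
      if "y \<in> ?W" for y
      using has_derivative_matrix_inv[of y] that by simp
    show "smooth_on (?W \<times> UNIV) (\<lambda>p. - (snd p ** H ** snd p))" for H :: "'a^'n^'n"
    proof -
      have 1: "smooth_on (?W \<times> UNIV) (\<lambda>p::('a^'n^'n) \<times> ('a^'n^'n). - snd p ** H)"
        by (rule smooth_on_linear)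
           (rule bounded_linear_compose[OF mm.bounded_linear_left bounded_linear_minus[OF bounded_linear_snd]])
      have 2: "smooth_on (?W \<times> UNIV) (\<lambda>p::('a^'n^'n) \<times> ('a^'n^'n). snd p)"
        by (rule smooth_on_linear[OF bounded_linear_snd])
      have "smooth_on (?W \<times> UNIV) (\<lambda>p. (- snd p ** H) ** snd p)"
        using smooth_on_matmul[OF WU 1 2] .
      then show ?thesis by (simp add: mm.minus_left)
    qed
    show "smooth_on (?W \<times> UNIV) snd" by (intro smooth_on_linear bounded_linear_snd)
  qed auto
  then show ?thesis by simp
qed


lemma smooth_on_continuous_on:
  assumes "open W" "smooth_on W f"
  shows "continuous_on W f"
proof -
  obtain f' where "\<And>x. x\<in>W \<Longrightarrow> (f has_derivative f' x) (at x)"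
    using smooth_onD[OF assms(2,1)] by blast
  then show ?thesis
    by (intro continuous_at_imp_continuous_on) (auto intro: has_derivative_continuous)
qed

lemma bounded_linear_axis: "bounded_linear (\<lambda>v::'a::real_normed_vector. axis i v :: 'a^'k)"
proof (rule bounded_linear_intro[where K=1])
  show "axis i (x + y) = axis i x + axis i y" for x y :: 'a
    by (simp add: vec_eq_iff axis_def)
  show "axis i (r *\<^sub>R x) = r *\<^sub>R axis i x" for r and x :: 'a
    by (simp add: vec_eq_iff axis_def)
  show "norm (axis i x :: 'a^'k) \<le> norm x * 1" for x :: 'a
  proof -
    have "norm (axis i x :: 'a^'k) \<le> (\<Sum>j\<in>UNIV. norm ((axis i x :: 'a^'k)$j))" by (rule norm_vec_le_sum)
    also have "\<dots> = norm x" by (simp add: axis_def if_distrib cong: if_cong)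
    finally show ?thesis by simp
  qed
qed

lemma vec_lambda_sum_axis:
  "(\<chi> i. F i) = (\<Sum>i\<in>UNIV. axis i (F i) :: 'a::comm_monoid_add^'k)"
  by (simp add: vec_eq_iff axis_def if_distrib cong: if_cong)

lemma smooth_on_vec_lambda:
  fixes F :: "'k::finite \<Rightarrow> 'x::real_normed_vector \<Rightarrow> 'a::real_normed_vector"
  assumes "open W" "\<And>i. smooth_on W (F i)"
  shows "smooth_on W (\<lambda>x. \<chi> i. F i x)"
proof -
  have "smooth_on W (\<lambda>x. \<Sum>i\<in>UNIV. axis i (F i x) :: 'a^'k)"
    by (intro smooth_on_sum[OF assms(1)] finite smooth_on_postlinear[OF bounded_linear_axis] assms(2))
  then show ?thesis by (simp add: vec_lambda_sum_axis[symmetric])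
qed

lemma smooth_on_vec_lambda2:
  fixes F :: "'k::finite \<Rightarrow> 'l::finite \<Rightarrow> 'x::real_normed_vector \<Rightarrow> 'a::real_normed_vector"
  assumes "open W" "\<And>i j. smooth_on W (F i j)"
  shows "smooth_on W (\<lambda>x. \<chi> i j. F i j x)"
  by (intro smooth_on_vec_lambda assms)

lemma smooth_on_vec_nth:
  assumes "smooth_on W f"
  shows "smooth_on W (\<lambda>x. f x $ i)"
  by (rule smooth_on_postlinear[OF bounded_linear_vec_nth assms])

lemma bounded_linear_matvec: "bounded_linear (\<lambda>A::real^'k^'m. A *v h)"
proof -
  have "linear (\<lambda>A::real^'k^'m. A *v h)"
    by (rule linearI) (simp_all add: matrix_vector_mult_add_rdistrib scaleR_matrix_vector_assoc)
  then show ?thesis using linear_conv_bounded_linear by blast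
qed

theorem smooth_local_inverse:
  fixes f :: "real^'k \<Rightarrow> real^'k"
  assumes U: "open U" and fs: "smooth_on U f" and x0: "x0 \<in> U"
    and d0: "(f has_derivative (\<lambda>h. h)) (at x0)"
  obtains U' V g where "open U'" "U' \<subseteq> U" "x0 \<in> U'" "open V" "f x0 \<in> V"
     "\<And>x. x \<in> U' \<Longrightarrow> g (f x) = x" "\<And>x. x \<in> U' \<Longrightarrow> f x \<in> V"
     "\<And>y. y \<in> V \<Longrightarrow> f (g y) = y" "\<And>y. y \<in> V \<Longrightarrow> g y \<in> U'" "smooth_on V g"
proof -
  obtain f' where f1: "\<And>z. z\<in>U \<Longrightarrow> (f has_derivative f' z) (at z)"
    and f2: "\<And>h. smooth_on U (\<lambda>z. f' z h)"
    using smooth_onD[OF fs U] by blast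
  have bl: "bounded_linear (f' z)" if "z\<in>U" for z using has_derivative_bounded_linear[OF f1[OF that]] .
  define F where "F z = Blinfun (f' z)" for z
  have Fa: "blinfun_apply (F z) = f' z" if "z \<in> U" for z
    using bounded_linear_Blinfun_apply[OF bl[OF that]] by (simp add: F_def)
  have derF: "(f has_derivative blinfun_apply (F z)) (at z)" if "z\<in>U" for z
    using f1[OF that] Fa[OF that] by simp
  have contF: "continuous_on U F"
  proof (rule continuous_on_blinfun_componentwise)
    fix i :: "real^'k"
    have "continuous_on U (\<lambda>z. f' z i)" by (rule smooth_on_continuous_on[OF U f2])
    then show "continuous_on U (\<lambda>z. blinfun_apply (F z) i)"
      by (rule continuous_on_eq) (simp add: Fa)
  qed
  have "f' x0 = (\<lambda>h. h)" by (rule has_derivative_unique[OF f1[OF x0] d0])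
  then have F0: "F x0 = id_blinfun" by (intro blinfun_eqI) (simp add: Fa[OF x0])
  have invf: "id_blinfun o\<^sub>L F x0 = id_blinfun" by (simp add: F0 blinfun_eqI)
  obtain U' V g g' where U': "open U'" "U' \<subseteq> U" "x0 \<in> U'" and V: "open V" "f x0 \<in> V"
    and hom: "homeomorphism U' V f g"
    and gd: "\<And>y. y \<in> V \<Longrightarrow> (g has_derivative g' y) (at y)"
    and g'e: "\<And>y. y \<in> V \<Longrightarrow> g' y = inv (blinfun_apply (F (g y)))"
    and bij: "\<And>y. y \<in> V \<Longrightarrow> bij (blinfun_apply (F (g y)))"
    using inverse_function_theorem[OF U derF contF x0 invf] by blast
  have gf: "\<And>x. x \<in> U' \<Longrightarrow> g (f x) = x" and fU': "\<And>x. x \<in> U' \<Longrightarrow> f x \<in> V"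
    and fg: "\<And>y. y \<in> V \<Longrightarrow> f (g y) = y" and gV: "\<And>y. y \<in> V \<Longrightarrow> g y \<in> U'"
    using hom unfolding homeomorphism_def by blast+
  define J where "J z = matrix (f' z)" for z
  have Jv: "J z *v h = f' z h" if "z \<in> U" for z h
    using matrix_vector_mul(3)[OF bl[OF that]] by (simp add: J_def fun_eq_iff)
  have Js: "smooth_on U J"
  proof -
    have "smooth_on U (\<lambda>z. \<chi> i j. f' z (axis j 1) $ i)"
      by (intro smooth_on_vec_lambda2[OF U] smooth_on_vec_nth f2)
    moreover have "J = (\<lambda>z. \<chi> i j. f' z (axis j 1) $ i)"
      by (rule ext) (simp add: J_def matrix_def)
    ultimately show ?thesis by simp
  qed
  have Jinv: "invertible (J z)" if "z \<in> U'" for z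
  proof -
    obtain y where y: "y \<in> V" "z = g y" using hom \<open>z \<in> U'\<close> unfolding homeomorphism_def by blast
    have zU: "z \<in> U" using that U' by blast
    have "(*v) (J z) = f' z" using Jv[OF zU] by auto
    then show ?thesis using bij[OF y(1)] Fa[OF zU] y(2) by (simp add: invertible_eq_bij)
  qed
  have g'v: "g' y h = matrix_inv (J (g y)) *v h" if "y \<in> V" for y h
  proof -
    have z: "g y \<in> U'" "g y \<in> U" using gV[OF that] U' by auto
    have inj: "inj (f' (g y))" using bij[OF that] Fa[OF z(2)] by (simp add: bij_is_inj)
    have "f' (g y) (matrix_inv (J (g y)) *v h) = h"
      using Jv[OF z(2), symmetric] matrix_inv_both(1)[OF Jinv[OF z(1)]]
      by (simp add: matrix_vector_mul_assoc)
    then have "inv (f' (g y)) h = matrix_inv (J (g y)) *v h" by (rule inv_f_eq[OF inj])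
    then show ?thesis using g'e[OF that] Fa[OF z(2)] by simp
  qed
  have gs: "smooth_on V (\<lambda>y. snd (y, g y))"
  proof (rule smooth_on_ode[OF V(1) U'(1) gV, where \<Phi>="\<lambda>h p. matrix_inv (J (snd p)) *v h"])
    show "(g has_derivative (\<lambda>h. matrix_inv (J (snd (y, g y))) *v h)) (at y)" if "y \<in> V" for y
    proof -
      have "g' y = (\<lambda>h. matrix_inv (J (g y)) *v h)" using g'v[OF that] by (simp add: fun_eq_iff)
      then show ?thesis using gd[OF that] by simp
    qed
  next
    have mJ: "smooth_on U' (\<lambda>z. matrix_inv (J z))"
      by (rule smooth_on_compose[OF U'(1) open_invertible smooth_on_subset[OF Js U'(2)] _ smooth_on_matrix_inv])
         (simp add: Jinv)
    show "smooth_on (V \<times> U') (\<lambda>p. matrix_inv (J (snd p)) *v h)" for h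
      by (rule smooth_on_postlinear[OF bounded_linear_matvec])
         (rule smooth_on_prelinear[OF mJ bounded_linear_snd], auto)
  next
    show "smooth_on (V \<times> U') snd" by (rule smooth_on_linear[OF bounded_linear_snd])
  qed
  have "smooth_on V g" by (rule smooth_on_cong[OF gs]) simp
  then show ?thesis
    using that[of U' V g] U' V gf fU' fg gV by blast
qed


definition adj :: "complex^'n^'n \<Rightarrow> complex^'n^'n" where
  "adj A = (\<chi> i j. cnj (A$j$i))"

lemma adj_nth[simp]: "adj A $ i $ j = cnj (A $ j $ i)"
  by (simp add: adj_def)

lemma adj_adj[simp]: "adj (adj A) = A"
  by (simp add: vec_eq_iff)

lemma adj_add: "adj (A + B) = adj A + adj B"
  by (simp add: vec_eq_iff)

lemma adj_diff: "adj (A - B) = adj A - adj B"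
  by (simp add: vec_eq_iff)

lemma adj_minus: "adj (- A) = - adj A"
  by (simp add: vec_eq_iff)

lemma adj_zero[simp]: "adj 0 = 0"
  by (simp add: vec_eq_iff)

lemma adj_scaleR: "adj (r *\<^sub>R A) = r *\<^sub>R adj A"
  by (simp add: vec_eq_iff)

lemma adj_mat[simp]: "adj (mat c) = mat (cnj c)"
  by (simp add: vec_eq_iff mat_def)

lemma adj_mult: "adj (A ** B) = adj B ** adj A"
  by (simp add: vec_eq_iff matrix_matrix_mult_def mult.commute)

lemma adj_sum: "adj (\<Sum>i\<in>S. f i) = (\<Sum>i\<in>S. adj (f i))"
  by (induction S rule: infinite_finite_induct) (simp_all add: adj_add)

lemma bounded_linear_adj: "bounded_linear adj"
proof -
  have "linear adj" by (rule linearI) (simp_all add: adj_add adj_scaleR)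
  then show ?thesis using linear_conv_bounded_linear by blast
qed

lemma trace_adj: "trace (adj A) = cnj (trace A)"
  by (simp add: trace_def)

lemma inner_mat: "A \<bullet> B = Re (trace (adj A ** B))"
proof -
  have "A \<bullet> B = (\<Sum>i\<in>UNIV. \<Sum>j\<in>UNIV. Re (cnj (A$i$j) * B$i$j))"
    by (simp add: inner_vec_def inner_complex_def)
  also have "\<dots> = (\<Sum>j\<in>UNIV. \<Sum>i\<in>UNIV. Re (cnj (A$i$j) * B$i$j))"
    by (rule sum.swap)
  also have "\<dots> = Re (trace (adj A ** B))"
    by (simp add: trace_def matrix_matrix_mult_def Re_sum)
  finally show ?thesis .
qed

lemma hermitian_adj: "hermitian_mat S \<longleftrightarrow> adj S = S"
  unfolding hermitian_mat_def vec_eq_iff adj_nth by metis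

definition skew :: "complex^'n^'n \<Rightarrow> bool" where "skew Y \<longleftrightarrow> adj Y = - Y"

lemma skew_add: "skew A \<Longrightarrow> skew B \<Longrightarrow> skew (A + B)"
  by (simp add: skew_def adj_add)

lemma skew_scaleR: "skew A \<Longrightarrow> skew (r *\<^sub>R A)"
  by (simp add: skew_def adj_scaleR)

lemma skew_zero: "skew 0" by (simp add: skew_def)

lemma skew_sum: "(\<And>i. i \<in> S \<Longrightarrow> skew (f i)) \<Longrightarrow> skew (\<Sum>i\<in>S. f i)"
  by (induction S rule: infinite_finite_induct) (simp_all add: skew_zero skew_add)

lemma skew_minus: "skew A \<Longrightarrow> skew (- A)"
  by (simp add: skew_def adj_minus)

lemma skew_invertible:
  fixes Y :: "complex^'n^'n"
  assumes "skew Y"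
  shows "invertible (mat 1 - Y)"
proof -
  have ker: "x = 0" if "(mat 1 - Y) *v x = 0" for x :: "complex^'n"
  proof -
    have Yx: "Y *v x = x" using that by (simp add: matrix_vector_mult_diff_rdistrib)
    define s where "s = (\<Sum>a\<in>UNIV. cnj (x$a) * (Y *v x)$a)"
    have s1: "s = (\<Sum>a\<in>UNIV. complex_of_real ((cmod (x$a))\<^sup>2))"
      unfolding s_def Yx by (simp only: complex_norm_square) (simp add: mult.commute)
    have "cnj s = (\<Sum>a\<in>UNIV. \<Sum>b\<in>UNIV. x$a * cnj (Y$a$b) * cnj (x$b))"
      by (simp add: s_def matrix_vector_mult_def sum_distrib_left mult.assoc)
    also have "\<dots> = (\<Sum>a\<in>UNIV. \<Sum>b\<in>UNIV. x$a * (- Y$b$a) * cnj (x$b))"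
    proof -
      have "cnj (Y$a$b) = - Y$b$a" for a b
        using arg_cong[OF assms[unfolded skew_def], of "\<lambda>M. M$b$a"] by simp
      then show ?thesis by simp
    qed
    also have "\<dots> = - (\<Sum>a\<in>UNIV. \<Sum>b\<in>UNIV. cnj (x$b) * Y$b$a * x$a)"
      by (simp add: sum_negf mult_ac)
    also have "(\<Sum>a\<in>UNIV. \<Sum>b\<in>UNIV. cnj (x$b) * Y$b$a * x$a) = (\<Sum>b\<in>UNIV. \<Sum>a\<in>UNIV. cnj (x$b) * Y$b$a * x$a)"
      by (rule sum.swap)
    also have "\<dots> = s"
      by (simp add: s_def matrix_vector_mult_def sum_distrib_left mult.assoc)
    finally have "cnj s = - s" .
    then have "Re (cnj s) = Re (- s)" by simp
    then have "Re s = 0" by simp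
    then have "(\<Sum>a\<in>UNIV. (cmod (x$a))\<^sup>2) = 0" using s1 by (simp add: Re_sum)
    then have "\<forall>a\<in>UNIV. (cmod (x$a))\<^sup>2 = 0" by (subst (asm) sum_nonneg_eq_0_iff) auto
    then show ?thesis by (simp add: vec_eq_iff)
  qed
  have "inj ((*v) (mat 1 - Y))"
  proof (rule injI)
    fix x y assume "(mat 1 - Y) *v x = (mat 1 - Y) *v y"
    then have "(mat 1 - Y) *v (x - y) = 0" by (simp add: matrix_vector_mult_diff_distrib)
    then show "x = y" using ker[of "x - y"] by simp
  qed
  then show ?thesis
    using matrix_left_invertible_injective invertible_left_inverse by blast
qed

lemma matrix_inv_1[simp]: "matrix_inv (mat 1 :: 'a::field^'n^'n) = mat 1"
  by (rule matrix_inv_unique) simp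

lemma skew_invertible2:
  fixes Y :: "complex^'n^'n"
  assumes "skew Y"
  shows "invertible (mat 1 + Y)"
  using skew_invertible[OF skew_minus[OF assms]] by simp

definition cay :: "complex^'n^'n \<Rightarrow> complex^'n^'n" where
  "cay Y = matrix_inv (mat 1 - Y) ** (mat 1 + Y)"

lemma cay_zero[simp]: "cay 0 = mat 1"
  by (simp add: cay_def)

lemma inv_prod:
  fixes A B :: "'a::field^'n^'n"
  assumes "invertible A" "invertible B"
  shows "matrix_inv (A ** B) = matrix_inv B ** matrix_inv A"
proof (rule matrix_inv_unique)
  have "A ** B ** (matrix_inv B ** matrix_inv A) = A ** (B ** matrix_inv B) ** matrix_inv A"
    by (simp add: matrix_mul_assoc)
  also have "\<dots> = mat 1" using matrix_inv_both[OF assms(1)] matrix_inv_both[OF assms(2)] by simp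
  finally show "A ** B ** (matrix_inv B ** matrix_inv A) = mat 1" .
qed

lemma cay_unitary:
  fixes Y :: "complex^'n^'n"
  assumes Y: "skew Y"
  shows "adj (cay Y) ** cay Y = mat 1" "cay Y ** adj (cay Y) = mat 1"
proof -
  define A where "A = mat 1 - Y"
  define B where "B = mat 1 + Y"
  have iA: "invertible A" using skew_invertible[OF Y] by (simp add: A_def)
  have iB: "invertible B" using skew_invertible2[OF Y] by (simp add: B_def)
  have adjA: "adj A = B" using Y by (simp add: A_def B_def adj_diff skew_def)
  have adjB: "adj B = A" using Y by (simp add: A_def B_def adj_add skew_def)
  have comm: "A ** B = B ** A"
    by (simp add: A_def B_def matmul_diff_left matrix_add_ldistrib mm.add_left matmul_diff_right)
  have AA: "A ** matrix_inv A = mat 1" "matrix_inv A ** A = mat 1" using matrix_inv_both[OF iA] by auto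
  have BB: "B ** matrix_inv B = mat 1" "matrix_inv B ** B = mat 1" using matrix_inv_both[OF iB] by auto
  have "adj (matrix_inv A) ** B = mat 1"
    using arg_cong[OF AA(1), of adj] by (simp add: adj_mult adjA)
  then have "B ** adj (matrix_inv A) = mat 1" using matrix_left_right_inverse by blast
  then have adjiA: "adj (matrix_inv A) = matrix_inv B" by (simp add: matrix_inv_unique)
  have c2: "matrix_inv B ** matrix_inv A = matrix_inv A ** matrix_inv B"
    using inv_prod[OF iA iB] inv_prod[OF iB iA] comm by simp
  have P: "cay Y = matrix_inv A ** B" by (simp add: cay_def A_def B_def)
  have adjP: "adj (cay Y) = A ** matrix_inv B" by (simp add: P adj_mult adjB adjiA)
  have "adj (cay Y) ** cay Y = (A ** matrix_inv B) ** (matrix_inv A ** B)"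
    unfolding adjP by (simp only: P)
  also have "\<dots> = A ** (matrix_inv B ** matrix_inv A) ** B"
    by (simp add: matrix_mul_assoc)
  also have "\<dots> = (A ** matrix_inv A) ** (matrix_inv B ** B)"
    by (simp add: c2 matrix_mul_assoc)
  also have "\<dots> = mat 1" by (simp add: AA BB)
  finally show 1: "adj (cay Y) ** cay Y = mat 1" .
  then show "cay Y ** adj (cay Y) = mat 1" using matrix_left_right_inverse by blast
qed


definition sys_mul :: "('n::finite) system \<Rightarrow> (nat \<Rightarrow> complex^'n^'n) \<Rightarrow> 'n system" where
  "sys_mul V P i r c = (\<Sum>b\<in>UNIV. V i r b * P i $ b $ c)"

lemma wf_sys_mul: "wf_system m k V \<Longrightarrow> wf_system m k (sys_mul V P)"
  unfolding wf_system_def sys_mul_def by simp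

lemma sys_mul_id: "(\<And>i. P i = mat 1) \<Longrightarrow> sys_mul V P = V"
  by (simp add: sys_mul_def fun_eq_iff mat_def if_distrib cong: if_cong)

lemma frame_block_sys_mul:
  "frame_block k (sys_mul V P) i = adj (P i) ** frame_block k V i ** P i"
proof -
  have "(\<Sum>r<k i. cnj (\<Sum>x\<in>UNIV. V i r x * P i $ x $ a) * (\<Sum>y\<in>UNIV. V i r y * P i $ y $ b))
      = (\<Sum>y\<in>UNIV. (\<Sum>x\<in>UNIV. cnj (P i $ x $ a) * (\<Sum>r<k i. cnj (V i r x) * V i r y)) * P i $ y $ b)"
    for a b
  proof -
    have "(\<Sum>r<k i. cnj (\<Sum>x\<in>UNIV. V i r x * P i $ x $ a) * (\<Sum>y\<in>UNIV. V i r y * P i $ y $ b))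
        = (\<Sum>r<k i. \<Sum>x\<in>UNIV. \<Sum>y\<in>UNIV. cnj (P i $ x $ a) * (cnj (V i r x) * V i r y) * P i $ y $ b)"
      by (simp add: cnj_sum sum_distrib_left sum_distrib_right mult_ac)
    also have "\<dots> = (\<Sum>x\<in>UNIV. \<Sum>r<k i. \<Sum>y\<in>UNIV. cnj (P i $ x $ a) * (cnj (V i r x) * V i r y) * P i $ y $ b)"
      by (rule sum.swap)
    also have "\<dots> = (\<Sum>x\<in>UNIV. \<Sum>y\<in>UNIV. \<Sum>r<k i. cnj (P i $ x $ a) * (cnj (V i r x) * V i r y) * P i $ y $ b)"
      by (rule sum.cong[OF refl], rule sum.swap)
    also have "\<dots> = (\<Sum>y\<in>UNIV. \<Sum>x\<in>UNIV. \<Sum>r<k i. cnj (P i $ x $ a) * (cnj (V i r x) * V i r y) * P i $ y $ b)"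
      by (rule sum.swap)
    also have "\<dots> = (\<Sum>y\<in>UNIV. (\<Sum>x\<in>UNIV. cnj (P i $ x $ a) * (\<Sum>r<k i. cnj (V i r x) * V i r y)) * P i $ y $ b)"
      by (simp add: sum_distrib_left sum_distrib_right)
    finally show ?thesis .
  qed
  then show ?thesis
    by (simp add: frame_block_def sys_mul_def vec_eq_iff matrix_matrix_mult_def)
qed

lemma rows_sys_mul:
  assumes "P i ** adj (P i) = mat 1"
  shows "(\<Sum>c\<in>UNIV. sys_mul V P i r c * cnj (sys_mul V P i s c)) = (\<Sum>c\<in>UNIV. V i r c * cnj (V i s c))"
proof -
  have PP: "(\<Sum>c\<in>UNIV. P i $ x $ c * cnj (P i $ y $ c)) = (if x = y then 1 else 0)" for x y
    using arg_cong[OF assms, of "\<lambda>M. M $ x $ y"] by (simp add: matrix_matrix_mult_def mat_def)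
  have "(\<Sum>c\<in>UNIV. sys_mul V P i r c * cnj (sys_mul V P i s c))
      = (\<Sum>c\<in>UNIV. \<Sum>y\<in>UNIV. \<Sum>x\<in>UNIV. V i r x * cnj (V i s y) * (P i $ x $ c * cnj (P i $ y $ c)))"
    by (simp add: sys_mul_def cnj_sum sum_distrib_left sum_distrib_right mult_ac)
  also have "\<dots> = (\<Sum>y\<in>UNIV. \<Sum>c\<in>UNIV. \<Sum>x\<in>UNIV. V i r x * cnj (V i s y) * (P i $ x $ c * cnj (P i $ y $ c)))"
    by (rule sum.swap)
  also have "\<dots> = (\<Sum>y\<in>UNIV. \<Sum>x\<in>UNIV. \<Sum>c\<in>UNIV. V i r x * cnj (V i s y) * (P i $ x $ c * cnj (P i $ y $ c)))"
    by (rule sum.cong[OF refl], rule sum.swap)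
  also have "\<dots> = (\<Sum>x\<in>UNIV. \<Sum>y\<in>UNIV. \<Sum>c\<in>UNIV. V i r x * cnj (V i s y) * (P i $ x $ c * cnj (P i $ y $ c)))"
    by (rule sum.swap)
  also have "\<dots> = (\<Sum>x\<in>UNIV. \<Sum>y\<in>UNIV. V i r x * cnj (V i s y) * (if x = y then 1 else 0))"
    by (simp add: sum_distrib_left[symmetric] PP)
  also have "\<dots> = (\<Sum>c\<in>UNIV. V i r c * cnj (V i s c))"
    by (simp add: if_distrib cong: if_cong)
  finally show ?thesis .
qed

lemma RS_op_sys_mul:
  "RS_op m k (sys_mul V P) = (\<Sum>i<m. adj (P i) ** frame_block k V i ** P i)"
  by (simp add: RS_op_def frame_block_sys_mul)

lemma adj_frame_block: "adj (frame_block k V i) = frame_block k V i"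
  by (simp add: frame_block_def vec_eq_iff cnj_sum mult.commute)

lemma adj_RS_op: "adj (RS_op m k V) = RS_op m k V"
  by (simp add: RS_op_def adj_sum adj_frame_block)

lemma RS_op_nth: "RS_op m k V $ a $ b = (\<Sum>i<m. \<Sum>r<k i. cnj (V i r a) * V i r b)"
  by (simp add: RS_op_def frame_block_def)

lemma quad_RS_op:
  "(\<Sum>a\<in>UNIV. \<Sum>b\<in>UNIV. cnj (x$a) * RS_op m k V $ a $ b * x$b)
   = (\<Sum>i<m. \<Sum>r<k i. cnj (\<Sum>a\<in>UNIV. V i r a * x$a) * (\<Sum>b\<in>UNIV. V i r b * x$b))"
proof -
  have "(\<Sum>a\<in>UNIV. \<Sum>b\<in>UNIV. cnj (x$a) * RS_op m k V $ a $ b * x$b)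
      = (\<Sum>a\<in>UNIV. \<Sum>b\<in>UNIV. \<Sum>i<m. \<Sum>r<k i. cnj (V i r a * x$a) * (V i r b * x$b))"
    by (simp add: RS_op_nth sum_distrib_left sum_distrib_right mult_ac)
  also have "\<dots> = (\<Sum>a\<in>UNIV. \<Sum>i<m. \<Sum>b\<in>UNIV. \<Sum>r<k i. cnj (V i r a * x$a) * (V i r b * x$b))"
    by (rule sum.cong[OF refl], rule sum.swap)
  also have "\<dots> = (\<Sum>a\<in>UNIV. \<Sum>i<m. \<Sum>r<k i. \<Sum>b\<in>UNIV. cnj (V i r a * x$a) * (V i r b * x$b))"
    by (rule sum.cong[OF refl], rule sum.cong[OF refl], rule sum.swap)
  also have "\<dots> = (\<Sum>i<m. \<Sum>a\<in>UNIV. \<Sum>r<k i. \<Sum>b\<in>UNIV. cnj (V i r a * x$a) * (V i r b * x$b))"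
    by (rule sum.swap)
  also have "\<dots> = (\<Sum>i<m. \<Sum>r<k i. \<Sum>a\<in>UNIV. \<Sum>b\<in>UNIV. cnj (V i r a * x$a) * (V i r b * x$b))"
    by (rule sum.cong[OF refl], rule sum.swap)
  also have "\<dots> = (\<Sum>i<m. \<Sum>r<k i. \<Sum>b\<in>UNIV. \<Sum>a\<in>UNIV. cnj (V i r a * x$a) * (V i r b * x$b))"
    by (rule sum.cong[OF refl], rule sum.cong[OF refl], rule sum.swap)
  also have "\<dots> = (\<Sum>i<m. \<Sum>r<k i. cnj (\<Sum>a\<in>UNIV. V i r a * x$a) * (\<Sum>b\<in>UNIV. V i r b * x$b))"
    by (simp add: cnj_sum sum_distrib_left sum_distrib_right)
  finally show ?thesis .
qed

lemma hermitian_RS_op: "hermitian_mat (RS_op m k V)"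
  using adj_RS_op hermitian_adj by blast

lemma posdef_RS_op:
  assumes inv: "invertible (RS_op m k V)"
  shows "posdef_mat (RS_op m k V)"
  unfolding posdef_mat_def
proof (intro conjI hermitian_RS_op allI impI)
  fix x :: "complex^'a" assume x: "x \<noteq> 0"
  define w where "w i r = (\<Sum>b\<in>UNIV. V i r b * x$b)" for i r
  have q: "(\<Sum>a\<in>UNIV. \<Sum>b\<in>UNIV. cnj (x$a) * RS_op m k V $ a $ b * x$b)
      = (\<Sum>i<m. \<Sum>r<k i. complex_of_real ((cmod (w i r))\<^sup>2))"
    unfolding quad_RS_op w_def[symmetric] by (simp only: complex_norm_square) (simp add: mult.commute)
  have ge: "0 \<le> (\<Sum>i<m. \<Sum>r<k i. (cmod (w i r))\<^sup>2)" by (intro sum_nonneg) auto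
  show "0 < Re (\<Sum>a\<in>UNIV. \<Sum>b\<in>UNIV. cnj (x$a) * RS_op m k V $ a $ b * x$b)"
  proof (rule ccontr)
    assume "\<not> ?thesis"
    then have "(\<Sum>i<m. \<Sum>r<k i. (cmod (w i r))\<^sup>2) = 0" using ge q by (simp add: Re_sum)
    then have "\<forall>i\<in>{..<m}. (\<Sum>r<k i. (cmod (w i r))\<^sup>2) = 0"
      by (subst (asm) sum_nonneg_eq_0_iff) (auto intro: sum_nonneg)
    then have w0: "w i r = 0" if "i < m" "r < k i" for i r
      using that by (auto simp: sum_nonneg_eq_0_iff)
    have "RS_op m k V *v x = 0"
    proof -
      have "(RS_op m k V *v x) $ a = (\<Sum>i<m. \<Sum>r<k i. cnj (V i r a) * w i r)" for a
      proof -
        have "(RS_op m k V *v x) $ a = (\<Sum>b\<in>UNIV. \<Sum>i<m. \<Sum>r<k i. cnj (V i r a) * (V i r b * x$b))"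
          by (simp add: matrix_vector_mult_def RS_op_nth sum_distrib_left sum_distrib_right mult_ac)
        also have "\<dots> = (\<Sum>i<m. \<Sum>b\<in>UNIV. \<Sum>r<k i. cnj (V i r a) * (V i r b * x$b))"
          by (rule sum.swap)
        also have "\<dots> = (\<Sum>i<m. \<Sum>r<k i. \<Sum>b\<in>UNIV. cnj (V i r a) * (V i r b * x$b))"
          by (rule sum.cong[OF refl], rule sum.swap)
        also have "\<dots> = (\<Sum>i<m. \<Sum>r<k i. cnj (V i r a) * w i r)"
          by (simp add: w_def sum_distrib_left)
        finally show ?thesis .
      qed
      then show ?thesis using w0 by (simp add: vec_eq_iff)
    qed
    then have "x = 0"
      using inj_matrix_vector_mult[OF inv] by (metis matrix_vector_mult_0_right injD)
    then show False using x by simp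
  qed
qed

lemma trace_frame_block: "trace (frame_block k V i) = (\<Sum>r<k i. \<Sum>c\<in>UNIV. V i r c * cnj (V i r c))"
  by (simp add: trace_def frame_block_def mult.commute sum.swap[of _ UNIV])

lemma trace_unitary_conj:
  assumes "P ** adj P = mat 1"
  shows "trace (adj P ** F ** P) = trace F"
proof -
  have "trace (adj P ** F ** P) = trace (P ** (adj P ** F))" by (rule trace_mul_sym)
  also have "\<dots> = trace F" by (simp add: matrix_mul_assoc assms)
  finally show ?thesis .
qed

definition Lam :: "nat \<Rightarrow> (nat \<Rightarrow> complex^'n^'n) \<Rightarrow> (nat \<Rightarrow> complex^'n^'n) \<Rightarrow> complex^'n^'n" where
  "Lam m F Y = (\<Sum>i<m. 2 *\<^sub>R (F i ** Y i - Y i ** F i))"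

lemma Lam_add: "Lam m F (\<lambda>i. Y i + Z i) = Lam m F Y + Lam m F Z"
  by (simp add: Lam_def matrix_add_ldistrib mm.add_left sum.distrib[symmetric] scaleR_add_right algebra_simps)

lemma Lam_scaleR: "Lam m F (\<lambda>i. c *\<^sub>R Y i) = c *\<^sub>R Lam m F Y"
  by (simp add: Lam_def scaleR_sum_right matrix_scalar_ac scalar_matrix_assoc[symmetric] algebra_simps)

lemma Lam_zero: "Lam m F (\<lambda>i. 0) = 0"
  by (simp add: Lam_def)

lemma inner_comm_term:
  fixes F q :: "complex^'n^'n"
  assumes "adj q = q" "adj F = F"
  shows "q \<bullet> (F ** (F ** q - q ** F) - (F ** q - q ** F) ** F) = (F ** q - q ** F) \<bullet> (F ** q - q ** F)"
proof -
  define Y where "Y = F ** q - q ** F"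
  have adjY: "adj Y = - Y" using assms by (simp add: Y_def adj_diff adj_mult)
  have 1: "q \<bullet> (F ** Y - Y ** F) = Re (trace (q ** (F ** Y)) - trace (q ** (Y ** F)))"
    by (simp add: inner_mat assms matmul_diff_right trace_sub)
  have 2: "trace (q ** (Y ** F)) = trace (F ** q ** Y)"
    using trace_mul_sym[of "q ** Y" F] by (simp add: matrix_mul_assoc)
  have 3: "trace (q ** (F ** Y)) - trace (F ** q ** Y) = trace ((- Y) ** Y)"
  proof -
    have "trace (q ** (F ** Y)) - trace (F ** q ** Y) = trace ((q ** F - F ** q) ** Y)"
      by (simp add: trace_sub matmul_diff_left matrix_mul_assoc)
    moreover have "q ** F - F ** q = - Y" by (simp add: Y_def)
    ultimately show ?thesis by simp
  qed
  have 4: "Re (trace ((- Y) ** Y)) = Y \<bullet> Y"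
    by (simp add: inner_mat adjY)
  have "q \<bullet> (F ** Y - Y ** F) = Re (trace (q ** (F ** Y)) - trace (F ** q ** Y))"
    using 1 2 by simp
  also have "\<dots> = Re (trace ((- Y) ** Y))" using 3 by simp
  also have "\<dots> = Y \<bullet> Y" using 4 .
  finally show ?thesis by (simp only: Y_def)
qed

lemma trace_sum: "trace (\<Sum>i\<in>S. f i) = (\<Sum>i\<in>S. trace (f i :: 'a::comm_semiring_1^'n^'n))"
  by (induction S rule: infinite_finite_induct) (simp_all add: trace_add trace_0[simplified])

lemma trace_scaleR: "trace (r *\<^sub>R (A::complex^'n^'n)) = r *\<^sub>R trace A"
  by (simp add: trace_def scaleR_sum_right)

lemma trace_mat: "trace (mat c :: 'a::comm_semiring_1^'n^'n) = of_nat CARD('n) * c"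
  by (simp add: trace_def mat_def)

lemma commutator_surj:
  fixes F :: "nat \<Rightarrow> complex^'n^'n"
  assumes herm: "\<And>i. adj (F i) = F i"
    and irr: "\<And>A. (\<forall>i<m. A ** F i = F i ** A) \<Longrightarrow> A \<in> range mat"
    and T: "adj T = T" "trace T = 0"
  shows "\<exists>Y. (\<forall>i. skew (Y i)) \<and> Lam m F Y = T"
proof -
  define US where "US = {Lam m F Y | Y. \<forall>i. skew (Y i)}"
  have sub: "subspace US"
    unfolding subspace_def US_def
  proof (intro conjI ballI allI)
    show "0 \<in> {Lam m F Y |Y. \<forall>i. skew (Y i)}"
      by (rule CollectI, rule exI[of _ "\<lambda>i. 0"]) (simp add: Lam_zero skew_zero)
    fix x y assume "x \<in> {Lam m F Y |Y. \<forall>i. skew (Y i)}" "y \<in> {Lam m F Y |Y. \<forall>i. skew (Y i)}"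
    then obtain Y Z where "x = Lam m F Y" "\<forall>i. skew (Y i)" "y = Lam m F Z" "\<forall>i. skew (Z i)" by blast
    then show "x + y \<in> {Lam m F Y |Y. \<forall>i. skew (Y i)}"
      by (intro CollectI exI[of _ "\<lambda>i. Y i + Z i"]) (simp add: Lam_add skew_add)
  next
    fix c :: real and x assume "x \<in> {Lam m F Y |Y. \<forall>i. skew (Y i)}"
    then obtain Y where "x = Lam m F Y" "\<forall>i. skew (Y i)" by blast
    then show "c *\<^sub>R x \<in> {Lam m F Y |Y. \<forall>i. skew (Y i)}"
      by (intro CollectI exI[of _ "\<lambda>i. c *\<^sub>R Y i"]) (simp add: Lam_scaleR skew_scaleR)
  qed
  have spanUS: "span US = US" using sub by (simp add: span_eq_iff)
  obtain p q where p: "p \<in> span US" and q: "\<And>w. w \<in> span US \<Longrightarrow> orthogonal q w" and Tpq: "T = p + q"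
    using orthogonal_subspace_decomp_exists[of US T] by metis
  have "p \<in> US" using p spanUS by simp
  then obtain Yp where Yp: "p = Lam m F Yp" "\<forall>i. skew (Yp i)" unfolding US_def by blast
  have comm_herm: "adj (F i ** Y - Y ** F i) = F i ** Y - Y ** F i" if "skew Y" for i Y
    using that herm[of i] by (simp add: skew_def adj_diff adj_mult mm.minus_left mm.minus_right)
  have adjp: "adj p = p"
    by (simp add: Yp Lam_def adj_sum adj_scaleR comm_herm Yp(2))
  have trp: "trace p = 0"
  proof -
    have "trace (F i ** Yp i - Yp i ** F i) = 0" for i
      using trace_mul_sym[of "F i" "Yp i"] by (simp add: trace_sub)
    then show ?thesis by (simp add: Yp Lam_def trace_sum trace_scaleR)
  qed
  have qT: "q = T - p" using Tpq by simp
  have adjq: "adj q = q" using adjp T by (simp add: qT adj_diff)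
  have trq: "trace q = 0" using trp T by (simp add: qT trace_sub)
  define Yq where "Yq i = F i ** q - q ** F i" for i
  have skq: "skew (Yq i)" for i
    using herm[of i] adjq by (simp add: Yq_def skew_def adj_diff adj_mult)
  have "Lam m F Yq \<in> span US" unfolding US_def using skq by (intro span_base) blast
  then have "q \<bullet> Lam m F Yq = 0" using q by (simp add: orthogonal_def)
  moreover have "q \<bullet> Lam m F Yq = (\<Sum>i<m. 2 * (Yq i \<bullet> Yq i))"
    unfolding Lam_def inner_sum_right inner_scaleR_right
    by (intro sum.cong refl) (simp add: Yq_def inner_comm_term[OF adjq herm])
  ultimately have "(\<Sum>i<m. 2 * (Yq i \<bullet> Yq i)) = 0" by simp
  then have "\<forall>i\<in>{..<m}. 2 * (Yq i \<bullet> Yq i) = 0"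
    by (subst (asm) sum_nonneg_eq_0_iff) auto
  then have "Yq i = 0" if "i < m" for i using that by simp
  then have "\<forall>i<m. q ** F i = F i ** q" by (simp add: Yq_def)
  then obtain c where qc: "q = mat c" using irr by blast
  then have "of_nat CARD('n) * c = 0" using trq by (simp add: trace_mat)
  then have "c = 0" by simp
  then have "q = 0" by (simp add: qc)
  then show ?thesis using Tpq Yp by auto
qed


definition projH :: "complex^'n^'n \<Rightarrow> complex^'n^'n" where
  "projH Z = (1/2) *\<^sub>R (Z + adj Z) - (Re (trace Z) / real CARD('n)) *\<^sub>R mat 1"

lemma bounded_linear_projH: "bounded_linear (projH :: complex^'n^'n \<Rightarrow> _)"
proof -
  have tr: "Re (trace (x + y)) = Re (trace x) + Re (trace y)" "Re (trace (r *\<^sub>R x)) = r * Re (trace x)"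
    for x y :: "complex^'n^'n" and r
    by (simp_all add: trace_add trace_scaleR)
  have "linear (projH :: complex^'n^'n \<Rightarrow> _)"
    by (rule linearI) (simp_all add: projH_def adj_add adj_scaleR tr algebra_simps add_divide_distrib scaleR_add_left)
  then show ?thesis using linear_conv_bounded_linear by blast
qed

lemma adj_projH: "adj (projH Z) = projH Z"
  by (simp add: projH_def adj_diff adj_scaleR adj_add add.commute)

lemma trace_projH: "trace (projH (Z::complex^'n^'n)) = 0"
proof -
  have "trace ((1/2) *\<^sub>R (Z + adj Z)) = complex_of_real (Re (trace Z))"
    unfolding trace_scaleR trace_add trace_adj complex_add_cnj by (simp add: scaleR_conv_of_real)
  moreover have "trace ((Re (trace Z) / real CARD('n)) *\<^sub>R mat 1 :: complex^'n^'n) = complex_of_real (Re (trace Z))"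
    unfolding trace_scaleR trace_I by (simp add: scaleR_conv_of_real)
  ultimately show ?thesis by (simp add: projH_def trace_sub)
qed

lemma projH_id: "adj Z = Z \<Longrightarrow> trace Z = 0 \<Longrightarrow> projH Z = Z"
  by (simp add: projH_def scaleR_2[symmetric] scaleR_add_left[symmetric])

lemma projH_idem: "projH (projH Z) = projH Z"
  by (rule projH_id[OF adj_projH trace_projH])

lemma Lam_sum: "Lam m F (\<lambda>i. \<Sum>e\<in>S. Y e i) = (\<Sum>e\<in>S. Lam m F (Y e))"
proof (induction S rule: infinite_finite_induct)
  case (infinite S) then show ?case by (simp add: Lam_zero)
next
  case empty then show ?case by (simp add: Lam_zero)
next
  case (insert a S)
  then show ?case using Lam_add[of m F "Y a" "\<lambda>i. \<Sum>e\<in>S. Y e i"] by simp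
qed

definition Ysel :: "nat \<Rightarrow> (nat \<Rightarrow> complex^'n^'n) \<Rightarrow> complex^'n^'n \<Rightarrow> nat \<Rightarrow> complex^'n^'n" where
  "Ysel m F e = (SOME Y. (\<forall>i. skew (Y i)) \<and> Lam m F Y = projH e)"

definition Lmap :: "nat \<Rightarrow> (nat \<Rightarrow> complex^'n^'n) \<Rightarrow> complex^'n^'n \<Rightarrow> nat \<Rightarrow> complex^'n^'n" where
  "Lmap m F Z i = (\<Sum>e\<in>Basis. (Z \<bullet> e) *\<^sub>R Ysel m F e i)"

lemma bounded_linear_Lmap: "bounded_linear (\<lambda>Z. Lmap m F Z i)"
  unfolding Lmap_def
  by (intro bounded_linear_sum bounded_linear_scaleR_left[THEN bounded_linear_compose] bounded_linear_inner_left)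

lemma Lmap_zero[simp]: "Lmap m F 0 i = 0"
  by (simp add: Lmap_def)

context
  fixes m :: nat and F :: "nat \<Rightarrow> complex^'n^'n"
  assumes herm: "\<And>i. adj (F i) = F i"
    and irr: "\<And>A. (\<forall>i<m. A ** F i = F i ** A) \<Longrightarrow> A \<in> range mat"
begin

lemma Ysel: "(\<forall>i. skew (Ysel m F e i)) \<and> Lam m F (Ysel m F e) = projH e"
proof -
  have "\<exists>Y. (\<forall>i. skew (Y i)) \<and> Lam m F Y = projH e"
    by (rule commutator_surj[OF herm irr adj_projH trace_projH])
  then show ?thesis unfolding Ysel_def by (rule someI_ex)
qed

lemma skew_Lmap: "skew (Lmap m F Z i)"
  unfolding Lmap_def using Ysel by (intro skew_sum skew_scaleR) auto

lemma Lam_Lmap: "Lam m F (Lmap m F Z) = projH Z"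
proof -
  have "Lam m F (Lmap m F Z) = (\<Sum>e\<in>Basis. Lam m F (\<lambda>i. (Z \<bullet> e) *\<^sub>R Ysel m F e i))"
    unfolding Lmap_def[abs_def] by (rule Lam_sum)
  also have "\<dots> = (\<Sum>e\<in>Basis. (Z \<bullet> e) *\<^sub>R projH e)"
    by (simp add: Lam_scaleR Ysel)
  also have "\<dots> = projH (\<Sum>e\<in>Basis. (Z \<bullet> e) *\<^sub>R e)"
  proof -
    have lin: "linear (projH :: complex^'n^'n \<Rightarrow> _)" using bounded_linear_projH by (rule bounded_linear.linear)
    show ?thesis by (simp add: linear_sum[OF lin] linear_scale[OF lin])
  qed
  also have "\<dots> = projH Z" by (simp add: euclidean_representation)
  finally show ?thesis .
qed

end


lemma has_derivative_cay0: "(cay has_derivative (\<lambda>H. 2 *\<^sub>R H)) (at (0::complex^'n^'n))"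
proof -
  have d1: "((\<lambda>Y::complex^'n^'n. mat 1 - Y) has_derivative (\<lambda>H. - H)) (at 0)"
    by (auto intro!: derivative_eq_intros)
  have d2: "(matrix_inv has_derivative (\<lambda>H. - (matrix_inv (mat 1) ** H ** matrix_inv (mat 1)))) (at ((\<lambda>Y::complex^'n^'n. mat 1 - Y) 0))"
    using has_derivative_matrix_inv[of "mat 1 :: complex^'n^'n"] by (simp add: invertible_def)
  have d3: "((\<lambda>Y::complex^'n^'n. matrix_inv (mat 1 - Y)) has_derivative (\<lambda>H. H)) (at 0)"
    using has_derivative_compose[OF d1 d2] by simp
  have d4: "((\<lambda>Y::complex^'n^'n. mat 1 + Y) has_derivative (\<lambda>H. H)) (at 0)"
    by (auto intro!: derivative_eq_intros)
  have "((\<lambda>Y. matrix_inv (mat 1 - Y) ** (mat 1 + Y)) has_derivative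
        (\<lambda>H. matrix_inv (mat 1 - 0) ** H + H ** (mat 1 + (0::complex^'n^'n)))) (at 0)"
    using mm.FDERIV[OF d3 d4] by simp
  then show ?thesis unfolding cay_def[abs_def] by (simp add: scaleR_2)
qed

lemma smooth_on_cay_comp:
  fixes L :: "'x::real_normed_vector \<Rightarrow> complex^'n^'n"
  assumes "bounded_linear L" "\<And>x. skew (L x)"
  shows "smooth_on UNIV (\<lambda>x. cay (L x))"
proof -
  have a: "smooth_on UNIV (\<lambda>x. (- L) x + mat 1)"
    by (rule smooth_on_affine) (simp add: bounded_linear_minus[OF assms(1)])
  have b: "smooth_on UNIV (\<lambda>x. matrix_inv ((- L) x + mat 1))"
    by (rule smooth_on_compose[OF open_UNIV open_invertible a _ smooth_on_matrix_inv])
       (use skew_invertible[OF assms(2)] in \<open>simp add: algebra_simps\<close>)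
  have c: "smooth_on UNIV (\<lambda>x. L x + mat 1)" by (rule smooth_on_affine[OF assms(1)])
  have "smooth_on UNIV (\<lambda>x. matrix_inv ((- L) x + mat 1) ** (L x + mat 1))"
    by (rule smooth_on_matmul[OF open_UNIV b c])
  then show ?thesis by (simp add: cay_def algebra_simps)
qed


definition kap :: "complex^'n^'n \<Rightarrow> real^(('n \<times> 'n) \<times> bool)" where
  "kap Z = (\<chi> p. if snd p then Re (Z $ fst (fst p) $ snd (fst p)) else Im (Z $ fst (fst p) $ snd (fst p)))"

definition kinv :: "real^(('n \<times> 'n) \<times> bool) \<Rightarrow> complex^'n^'n" where
  "kinv x = (\<chi> a b. Complex (x $ ((a,b),True)) (x $ ((a,b),False)))"

lemma kinv_kap[simp]: "kinv (kap Z) = Z"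
  by (simp add: kinv_def kap_def vec_eq_iff complex_eq_iff)

lemma kap_kinv[simp]: "kap (kinv x) = x"
  by (auto simp: kinv_def kap_def vec_eq_iff)

lemma bounded_linear_kap: "bounded_linear kap"
proof -
  have "linear kap" by (rule linearI) (auto simp: kap_def vec_eq_iff)
  then show ?thesis using linear_conv_bounded_linear by blast
qed

lemma bounded_linear_kinv: "bounded_linear kinv"
proof -
  have "linear kinv" by (rule linearI) (auto simp: kinv_def vec_eq_iff complex_eq_iff)
  then show ?thesis using linear_conv_bounded_linear by blast
qed

lemma kap_0[simp]: "kap 0 = 0" and kinv_0[simp]: "kinv 0 = 0"
  by (simp_all add: kap_def kinv_def vec_eq_iff zero_complex.code)

definition fmap :: "nat \<Rightarrow> (nat \<Rightarrow> complex^'n^'n) \<Rightarrow> complex^'n^'n \<Rightarrow> complex^'n^'n" where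
  "fmap m F Z = (\<Sum>i<m. adj (cay (Lmap m F Z i)) ** F i ** cay (Lmap m F Z i)) + (Z - projH Z)"

lemma fmap_0: "fmap m F 0 = (\<Sum>i<m. F i)"
  by (simp add: fmap_def projH_def trace_0[simplified])

context
  fixes m :: nat and F :: "nat \<Rightarrow> complex^'n^'n"
  assumes herm: "\<And>i. adj (F i) = F i"
    and irr: "\<And>A. (\<forall>i<m. A ** F i = F i ** A) \<Longrightarrow> A \<in> range mat"
begin

lemma smooth_fmap: "smooth_on UNIV (fmap m F)"
proof -
  have c: "smooth_on UNIV (\<lambda>Z. cay (Lmap m F Z i))" for i
    by (rule smooth_on_cay_comp[OF bounded_linear_Lmap skew_Lmap[OF herm irr]])
  have t: "smooth_on UNIV (\<lambda>Z. adj (cay (Lmap m F Z i)) ** F i ** cay (Lmap m F Z i))" for i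
    by (intro smooth_on_matmul[OF open_UNIV] smooth_on_postlinear[OF bounded_linear_adj c] smooth_on_const c)
  have l: "smooth_on UNIV (\<lambda>Z::complex^'n^'n. Z - projH Z)"
    by (rule smooth_on_linear) (intro bounded_linear_sub bounded_linear_ident bounded_linear_projH)
  show ?thesis unfolding fmap_def[abs_def]
    by (rule smooth_on_add[OF open_UNIV smooth_on_sum[OF open_UNIV finite_lessThan t] l])
qed

lemma has_derivative_fmap0: "(fmap m F has_derivative (\<lambda>H. H)) (at 0)"
proof -
  have dc: "((\<lambda>Z. cay (Lmap m F Z i)) has_derivative (\<lambda>H. 2 *\<^sub>R Lmap m F H i)) (at 0)" for i
  proof -
    have "((\<lambda>Z. Lmap m F Z i) has_derivative (\<lambda>H. Lmap m F H i)) (at 0)"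
      by (rule bounded_linear_imp_has_derivative[OF bounded_linear_Lmap])
    from has_derivative_compose[OF this, of cay] has_derivative_cay0 show ?thesis by simp
  qed
  have dac: "((\<lambda>Z. adj (cay (Lmap m F Z i))) has_derivative (\<lambda>H. - (2 *\<^sub>R Lmap m F H i))) (at 0)" for i
  proof -
    have "((\<lambda>Z. adj (cay (Lmap m F Z i))) has_derivative (\<lambda>H. adj (2 *\<^sub>R Lmap m F H i))) (at 0)"
      using bounded_linear.has_derivative[OF bounded_linear_adj dc] .
    moreover have "adj (2 *\<^sub>R Lmap m F H i) = - (2 *\<^sub>R Lmap m F H i)" for H
      using skew_Lmap[OF herm irr] by (simp add: adj_scaleR skew_def)
    ultimately show ?thesis by simp
  qed
  have dt: "((\<lambda>Z. adj (cay (Lmap m F Z i)) ** F i ** cay (Lmap m F Z i)) has_derivative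
      (\<lambda>H. 2 *\<^sub>R (F i ** Lmap m F H i - Lmap m F H i ** F i))) (at 0)" for i
  proof -
    have d1: "((\<lambda>Z. adj (cay (Lmap m F Z i)) ** F i) has_derivative (\<lambda>H. - (2 *\<^sub>R Lmap m F H i) ** F i)) (at 0)"
      using mm.FDERIV[OF dac[of i] has_derivative_const[of "F i"]] by simp
    have "((\<lambda>Z. adj (cay (Lmap m F Z i)) ** F i ** cay (Lmap m F Z i)) has_derivative
      (\<lambda>H. adj (cay (Lmap m F 0 i)) ** F i ** (2 *\<^sub>R Lmap m F H i) + (- (2 *\<^sub>R Lmap m F H i) ** F i) ** cay (Lmap m F 0 i))) (at 0)"
      using mm.FDERIV[OF d1 dc[of i]] by simp
    then show ?thesis
      by (simp add: matrix_scalar_ac scalar_matrix_assoc mm.minus_left algebra_simps)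
  qed
  have "((\<lambda>Z. (\<Sum>i<m. adj (cay (Lmap m F Z i)) ** F i ** cay (Lmap m F Z i)) + (Z - projH Z)) has_derivative
      (\<lambda>H. (\<Sum>i<m. 2 *\<^sub>R (F i ** Lmap m F H i - Lmap m F H i ** F i)) + (H - projH H))) (at 0)"
    by (intro has_derivative_add has_derivative_sum dt has_derivative_diff has_derivative_ident
        bounded_linear_imp_has_derivative[OF bounded_linear_projH])
  moreover have "(\<Sum>i<m. 2 *\<^sub>R (F i ** Lmap m F H i - Lmap m F H i ** F i)) = projH H" for H
    using Lam_Lmap[OF herm irr] by (simp add: Lam_def)
  ultimately show ?thesis unfolding fmap_def[abs_def] by simp
qed

end


theorem theorem4p8:
  fixes m :: nat and k :: "nat \<Rightarrow> nat" and v :: "nat \<Rightarrow> real"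
    and V :: "'n::finite system" and \<tau> :: real
  assumes "m \<ge> 1"
    and "\<forall>i<m. 1 \<le> k i \<and> k i \<le> CARD('n)"
    and "\<forall>i<m. v i > 0"
    and "\<tau> = (\<Sum>i<m. (v i)\<^sup>2 * real (k i))"
    and "V \<in> Pv m k v"
    and "irreducible_sys m k V"
  shows "\<exists>(A :: (complex^'n^'n) set) (\<rho> :: complex^'n^'n \<Rightarrow> 'n system) W.
           openin (top_of_set (Gl_pos \<tau>)) A \<and> A \<subseteq> Gl_pos \<tau> \<and> RS_op m k V \<in> A
         \<and> open W \<and> W \<inter> herm_trace \<tau> = A
         \<and> (\<forall>i r c. smooth_on W (\<lambda>S. \<rho> S i r c))
         \<and> (\<forall>S\<in>A. \<rho> S \<in> Pv m k v \<and> RS_op m k (\<rho> S) = S)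
         \<and> \<rho> (RS_op m k V) = V"
proof -
  define F where "F i = frame_block k V i" for i
  have herm: "adj (F i) = F i" for i by (simp add: F_def adj_frame_block)
  have irr: "A \<in> range mat" if "\<forall>i<m. A ** F i = F i ** A" for A
    using assms(6) that unfolding irreducible_sys_def F_def by blast
  have wfV: "wf_system m k V"
    and rowsV: "\<And>i r s. i < m \<Longrightarrow> r < k i \<Longrightarrow> s < k i \<Longrightarrow>
        (\<Sum>c\<in>UNIV. V i r c * cnj (V i s c)) = (if r = s then complex_of_real ((v i)\<^sup>2) else 0)"
    and invV: "invertible (RS_op m k V)"
    using assms(5) unfolding Pv_def by blast+
  have SV: "RS_op m k V = (\<Sum>i<m. F i)" by (simp add: RS_op_def F_def)
  have trV: "trace (RS_op m k V) = complex_of_real \<tau>"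
  proof -
    have "trace (F i) = complex_of_real ((v i)\<^sup>2 * real (k i))" if "i < m" for i
    proof -
      have "trace (F i) = (\<Sum>r<k i. \<Sum>c\<in>UNIV. V i r c * cnj (V i r c))"
        by (simp add: F_def trace_frame_block)
      also have "\<dots> = (\<Sum>r<k i. complex_of_real ((v i)\<^sup>2))"
        using rowsV[OF that] by simp
      finally show ?thesis by (simp add: mult.commute)
    qed
    then show ?thesis by (simp add: SV trace_sum assms(4))
  qed
  define ft where "ft x = kap (fmap m F (kinv x))" for x
  have fts: "smooth_on UNIV ft"
    unfolding ft_def
    by (rule smooth_on_postlinear[OF bounded_linear_kap])
       (rule smooth_on_prelinear[OF smooth_fmap[OF herm irr] bounded_linear_kinv UNIV_I])
  have ftd: "(ft has_derivative (\<lambda>h. h)) (at 0)"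
  proof -
    have "((\<lambda>x. fmap m F (kinv x)) has_derivative (\<lambda>h. kinv h)) (at 0)"
      using has_derivative_compose[OF bounded_linear_imp_has_derivative[OF bounded_linear_kinv],
          of "fmap m F" "\<lambda>H. H" 0] has_derivative_fmap0[OF herm irr] by simp
    from bounded_linear.has_derivative[OF bounded_linear_kap this]
    show ?thesis by (simp add: ft_def[abs_def])
  qed
  obtain U' V0 g where U': "open U'" "0 \<in> U'" and V0: "open V0" "ft 0 \<in> V0"
    and gf: "\<And>x. x \<in> U' \<Longrightarrow> g (ft x) = x"
    and fg: "\<And>y. y \<in> V0 \<Longrightarrow> ft (g y) = y" and gs: "smooth_on V0 g"
    using smooth_local_inverse[OF open_UNIV fts UNIV_I ftd] by metis
  define W where "W = {S. kap S \<in> V0} \<inter> {S::complex^'n^'n. invertible S}"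
  define A where "A = W \<inter> herm_trace \<tau>"
  define z where "z S = kinv (g (kap S))" for S
  define \<rho> where "\<rho> S = sys_mul V (\<lambda>i. cay (Lmap m F (z S) i))" for S
  have openW: "open W"
  proof -
    have "open (kap -` V0)"
      by (rule continuous_open_vimage[OF V0(1)])
         (simp add: linear_continuous_at[OF bounded_linear_kap])
    then show ?thesis unfolding W_def by (intro open_Int open_invertible) (simp add: vimage_def)
  qed
  have fz: "fmap m F (z S) = S" if "S \<in> W" for S
  proof -
    have "ft (g (kap S)) = kap S" using that fg by (simp add: W_def)
    then have "kinv (kap (fmap m F (z S))) = kinv (kap S)" by (simp add: ft_def z_def)
    then show ?thesis by simp
  qed
  have unit: "cay (Lmap m F Z i) ** adj (cay (Lmap m F Z i)) = mat 1" for Z i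
    using cay_unitary(2)[OF skew_Lmap[OF herm irr]] .
  have RSrho: "RS_op m k (\<rho> S) = (\<Sum>i<m. adj (cay (Lmap m F (z S) i)) ** F i ** cay (Lmap m F (z S) i))" for S
    by (simp add: \<rho>_def RS_op_sys_mul F_def)
  have RSeq: "RS_op m k (\<rho> S) = S" if "S \<in> A" for S
  proof -
    define X where "X = RS_op m k (\<rho> S)"
    have SW: "S \<in> W" and hS: "hermitian_mat S" and tS: "trace S = complex_of_real \<tau>"
      using that by (auto simp: A_def herm_trace_def)
    have adjX: "adj X = X" by (simp add: X_def adj_RS_op)
    have trX: "trace X = complex_of_real \<tau>"
      by (simp add: X_def RSrho trace_sum trace_unitary_conj[OF unit] trV[symmetric] SV)
    have eq: "X + (z S - projH (z S)) = S" using fz[OF SW] by (simp add: X_def RSrho fmap_def)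
    have "projH (S - X) = S - X"
      using adjX hS tS trX by (intro projH_id) (simp_all add: hermitian_adj adj_diff trace_sub)
    moreover have "S - X = z S - projH (z S)" using eq by (simp add: algebra_simps)
    moreover have "projH (z S - projH (z S)) = 0"
      using linear_diff[OF bounded_linear.linear[OF bounded_linear_projH], of "z S" "projH (z S)"]
      by (simp add: projH_idem)
    ultimately have "S - X = 0" by simp
    then show ?thesis by (simp add: X_def)
  qed
  have rhoP: "\<rho> S \<in> Pv m k v" if "S \<in> A" for S
  proof -
    have "wf_system m k (\<rho> S)" unfolding \<rho>_def by (rule wf_sys_mul[OF wfV])
    moreover have "(\<Sum>c\<in>UNIV. \<rho> S i r c * cnj (\<rho> S i s c)) = (if r = s then complex_of_real ((v i)\<^sup>2) else 0)"
      if "i < m" "r < k i" "s < k i" for i r s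
      unfolding \<rho>_def rows_sys_mul[where P="\<lambda>i. cay (Lmap m F (z S) i)", OF unit] using rowsV[OF that] .
    moreover have "invertible (RS_op m k (\<rho> S))" using that RSeq[OF that] by (simp add: A_def W_def)
    ultimately show ?thesis unfolding Pv_def by blast
  qed
  have AG: "A \<subseteq> Gl_pos \<tau>"
  proof
    fix S assume S: "S \<in> A"
    have "posdef_mat (RS_op m k (\<rho> S))"
      by (rule posdef_RS_op) (use rhoP[OF S] in \<open>simp add: Pv_def\<close>)
    then show "S \<in> Gl_pos \<tau>" using S RSeq[OF S] by (simp add: Gl_pos_def A_def herm_trace_def)
  qed
  have f0: "fmap m F 0 = RS_op m k V" by (simp add: fmap_0 SV)
  have ft0: "ft 0 = kap (RS_op m k V)" by (simp add: ft_def f0)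
  have SVA: "RS_op m k V \<in> A"
    using V0(2) invV hermitian_RS_op trV by (simp add: A_def W_def herm_trace_def ft0)
  have rhoV: "\<rho> (RS_op m k V) = V"
  proof -
    have "g (kap (RS_op m k V)) = 0" using gf[OF U'(2)] by (simp add: ft0)
    then have "z (RS_op m k V) = 0" by (simp add: z_def)
    then show ?thesis by (simp add: \<rho>_def sys_mul_id)
  qed
  have openA: "openin (top_of_set (Gl_pos \<tau>)) A"
  proof -
    have "Gl_pos \<tau> \<subseteq> herm_trace \<tau>" by (auto simp: Gl_pos_def herm_trace_def posdef_mat_def)
    then have "A = Gl_pos \<tau> \<inter> W" using AG by (auto simp: A_def)
    then show ?thesis unfolding openin_open using openW by blast
  qed
  have smooth: "smooth_on W (\<lambda>S. \<rho> S i r c)" for i r c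
  proof -
    have zs: "smooth_on W z"
      unfolding z_def
      by (rule smooth_on_postlinear[OF bounded_linear_kinv])
         (rule smooth_on_prelinear[OF gs bounded_linear_kap], simp add: W_def)
    have cs: "smooth_on W (\<lambda>S. cay (Lmap m F (z S) i))"
      by (rule smooth_on_compose[OF openW open_UNIV zs UNIV_I
            smooth_on_cay_comp[OF bounded_linear_Lmap skew_Lmap[OF herm irr]]])
    have "smooth_on W (\<lambda>S. \<Sum>b\<in>UNIV. V i r b * cay (Lmap m F (z S) i) $ b $ c)"
      by (intro smooth_on_sum[OF openW] finite
            smooth_on_postlinear[OF bounded_linear_mult_right] smooth_on_vec_nth cs)
    then show ?thesis by (simp add: \<rho>_def sys_mul_def)
  qed
  show ?thesis
    by (rule exI[of _ A], rule exI[of _ \<rho>], rule exI[of _ W])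
       (use openA AG SVA openW smooth RSeq rhoP rhoV in \<open>auto simp: A_def\<close>)
qed


end
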